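(* Let $d_1>0$, $d_2>0$, $y_\star>0$ satisfy $d_1d_2<\frac{1}{4y_\star^2}$, and let $K_P\ge 0$, $K_I>0$, $u_0\in\mathbb{R}$. Consider the system on $\mathbb{R}^3$ with state $\chi=(\chi_1,\chi_2,\chi_3)=(x_1,x_2,x_c)$ given by $$\dot x_1 = -d_1x_1+1 - x_2 u,\qquad \dot x_2 = -d_2 x_2 + x_1 u,\qquad \dot x_c = y_\star - x_2,\qquad u = u_0 + K_I x_c + K_P (y_\star - x_2),$$ i.e. $$\dot\chi=\begin{pmatrix}-d_1\chi_1+1-u_0\chi_2-K_I\chi_2\chi_3-K_P\chi_2 y_\star+K_P\chi_2^2\\ -d_2\chi_2+u_0\chi_1+K_I\chi_1\chi_3+K_P\chi_1 y_\star-K_P\chi_1\chi_2\\ -\chi_2+y_\star\end{pmatrix}=:f(\chi).$$ Define $r:=\tfrac12\sqrt{1-4d_1d_2y_\star^2}>0$. Then: (C1) The closed-loop system has exactly two equilibrium points (both with $\chi_2=y_\star$), namely $$\bar\chi^u=\Big(\tfrac{1}{2d_1}\big(1-\sqrt{1-4d_1d_2y_\star^2}\big),\ y_\star,\ \tfrac{1}{K_Iy_\star}\big(1-d_1\bar\chi^u_1-u_0y_\star\big)\Big),$$ $$\bar\chi^s=\Big(\tfrac{1}{2d_1}\big(1+\sqrt{1-4d_1d_2y_\star^2}\big),\ y_\star,\ \tfrac{1}{K_Iy_\star}\big(1-d_1\bar\chi^s_1-u_0y_\star\big)\Big).$$ (C2) The equilibrium $\bar\chi^u$ (minimal current) is unstable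 for all choices of $K_P\ge0$, $K_I>0$, $u_0\in\mathbb{R}$. (C3) The equilibrium $\bar\chi^s$ (maximal current) is locally asymptotically stable provided $K_P\ge \tfrac12 d_1^2$ and $K_I\ge \tfrac{5}{16}\,\tfrac{d_1}{y_\star^2}$. (C4) Under the conditions of (C3), let $A:=\nabla f(\bar\chi^s)$ be the Jacobian of $f$ at $\bar\chi^s$, let $Q\in\mathbb{R}^{3\times3}$ be any positive definite matrix and let $P\in\mathbb{R}^{3\times 3}$ be the positive definite solution of $A^\top P+PA=-Q$. Then for $\rho_{\mathcal D}>0$ sufficiently small, the set $\mathcal{D}:=\{\chi\in\mathbb{R}^3 : (\chi-\bar\chi^s)^\top P(\chi-\bar\chi^s)\le\rho_{\mathcal D}\}$ is contained in the domain of attraction of $\bar\chi^s$.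
   Context: This is the (time- and state-scaled) averaged model of a DC-DC Boost converter: $x_1$ is the scaled inductor current, $x_2$ the scaled capacitor (output) voltage, $u$ the duty cycle, $d_1>0$ the scaled inductor (parasitic) resistance, $d_2>0$ the scaled load conductance, and the scaled source voltage is $1$. The controller is a PI controller acting on the voltage error $y_\star-x_2$, where $y_\star>0$ is the desired output voltage, $x_c$ is the integrator state, $K_P,K_I$ are the PI gains and $u_0$ is a designer-chosen constant. Stability notions are in the sense of Lyapunov. *)

theory Defs
  imports "HOL-Analysis.Analysis"
begin

definition boost_f :: "real \<Rightarrow> real \<Rightarrow> real \<Rightarrow> real \<Rightarrow> real \<Rightarrow> real \<Rightarrow> real^3 \<Rightarrow> real^3" where
  "boost_f d1 d2 ys KP KI u0 z =
     vector [ - d1 * z$1 + 1 - u0 * z$2 - KI * z$2 * z$3 - KP * z$2 * ys + KP * (z$2)^2,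
              - d2 * z$2 + u0 * z$1 + KI * z$1 * z$3 + KP * z$1 * ys - KP * z$1 * z$2,
              - z$2 + ys ]"

definition chi_u :: "real \<Rightarrow> real \<Rightarrow> real \<Rightarrow> real \<Rightarrow> real \<Rightarrow> real^3" where
  "chi_u d1 d2 ys KI u0 =
     (let x1 = (1 - sqrt (1 - 4 * d1 * d2 * ys^2)) / (2 * d1)
      in vector [x1, ys, (1 - d1 * x1 - u0 * ys) / (KI * ys)])"

definition chi_s :: "real \<Rightarrow> real \<Rightarrow> real \<Rightarrow> real \<Rightarrow> real \<Rightarrow> real^3" where
  "chi_s d1 d2 ys KI u0 =
     (let x1 = (1 + sqrt (1 - 4 * d1 * d2 * ys^2)) / (2 * d1)
      in vector [x1, ys, (1 - d1 * x1 - u0 * ys) / (KI * ys)])"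

definition ode_sol_on :: "('a::real_normed_vector \<Rightarrow> 'a) \<Rightarrow> (real \<Rightarrow> 'a) \<Rightarrow> real \<Rightarrow> bool" where
  "ode_sol_on f x T \<longleftrightarrow> (\<forall>t\<in>{0..<T}. (x has_vector_derivative f (x t)) (at t within {0..<T}))"

definition ode_sol_global :: "('a::real_normed_vector \<Rightarrow> 'a) \<Rightarrow> (real \<Rightarrow> 'a) \<Rightarrow> bool" where
  "ode_sol_global f x \<longleftrightarrow> (\<forall>t\<ge>0. (x has_vector_derivative f (x t)) (at t within {0..}))"

definition equilibrium :: "('a::real_normed_vector \<Rightarrow> 'a) \<Rightarrow> 'a \<Rightarrow> bool" where
  "equilibrium f xe \<longleftrightarrow> f xe = 0"

definition lyap_stable :: "('a::real_normed_vector \<Rightarrow> 'a) \<Rightarrow> 'a \<Rightarrow> bool" where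
  "lyap_stable f xe \<longleftrightarrow>
     (\<forall>\<epsilon>>0. \<exists>\<delta>>0. \<forall>x T. ode_sol_on f x T \<and> dist (x 0) xe < \<delta> \<longrightarrow>
        (\<forall>t\<in>{0..<T}. dist (x t) xe < \<epsilon>))"

definition unstable :: "('a::real_normed_vector \<Rightarrow> 'a) \<Rightarrow> 'a \<Rightarrow> bool" where
  "unstable f xe \<longleftrightarrow> \<not> lyap_stable f xe"

definition domain_of_attraction :: "('a::real_normed_vector \<Rightarrow> 'a) \<Rightarrow> 'a \<Rightarrow> 'a set" where
  "domain_of_attraction f xe =
     {x0. (\<exists>x. ode_sol_global f x \<and> x 0 = x0) \<and>
          (\<forall>x. ode_sol_global f x \<and> x 0 = x0 \<longrightarrow> (x \<longlongrightarrow> xe) at_top)}"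

definition loc_asym_stable :: "('a::real_normed_vector \<Rightarrow> 'a) \<Rightarrow> 'a \<Rightarrow> bool" where
  "loc_asym_stable f xe \<longleftrightarrow> lyap_stable f xe \<and>
     (\<exists>\<eta>>0. ball xe \<eta> \<subseteq> domain_of_attraction f xe)"

definition pos_def :: "real^3^3 \<Rightarrow> bool" where
  "pos_def M \<longleftrightarrow> transpose M = M \<and> (\<forall>v. v \<noteq> 0 \<longrightarrow> v \<bullet> (M *v v) > 0)"

end

theory Submission
  imports Defs
begin


fun picard :: "('a::euclidean_space \<Rightarrow> 'a) \<Rightarrow> 'a \<Rightarrow> nat \<Rightarrow> real \<Rightarrow> 'a" where
  "picard F x0 0 = (\<lambda>t. x0)"
| "picard F x0 (Suc n) = (\<lambda>t. x0 + integral {0..t} (\<lambda>s. F (picard F x0 n s)))"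

lemma has_integral_cpow:
  fixes t c :: real
  assumes "0 \<le> t"
  shows "((\<lambda>s. c * s^k) has_integral c * t^(Suc k) / Suc k) {0..t}"
proof -
  have d: "((\<lambda>s. c / Suc k * s^(Suc k)) has_vector_derivative c * x^k) (at x within {0..t})" for x
  proof -
    have "((\<lambda>s. c / Suc k * s^(Suc k)) has_real_derivative c / Suc k * (real (Suc k) * x ^ (Suc k - Suc 0))) (at x)"
      by (intro DERIV_cmult DERIV_pow)
    then have "((\<lambda>s. c / Suc k * s^(Suc k)) has_real_derivative c * x^k) (at x)"
      by (simp del: of_nat_Suc)
    then show ?thesis
      by (simp add: has_real_derivative_iff_has_vector_derivative has_vector_derivative_at_within)
  qed
  have "((\<lambda>s. c * s^k) has_integral ((\<lambda>s. c / Suc k * s^(Suc k)) t - (\<lambda>s. c / Suc k * s^(Suc k)) 0)) {0..t}"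
    by (rule fundamental_theorem_of_calculus[OF assms d])
  then show ?thesis by simp
qed

lemma picard_global:
  fixes F :: "'a::euclidean_space \<Rightarrow> 'a"
  assumes Lip: "\<And>a b. norm (F a - F b) \<le> L * norm (a - b)" and Lpos: "0 < L"
  shows "\<exists>x. ode_sol_global F x \<and> x 0 = x0"
proof -
  define p where "p = picard F x0"
  define M where "M = norm (F x0)"
  have M0: "0 \<le> M" unfolding M_def by simp
  have "L-lipschitz_on UNIV F"
    by (rule lipschitz_onI) (use Lip Lpos in \<open>auto simp: dist_norm\<close>)
  then have contF: "continuous_on UNIV F" by (rule lipschitz_on_continuous_on)
  have contFc: "continuous_on S (\<lambda>s. F (g s))" if "continuous_on S g" for S and g :: "real \<Rightarrow> 'a"
    using continuous_on_compose[OF that continuous_on_subset[OF contF], unfolded o_def] by auto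
  have cont: "continuous_on {0..b} (p n)" for n b
  proof (induction n)
    case 0 then show ?case by (simp add: p_def)
  next
    case (Suc n)
    have "continuous_on {0..b} (\<lambda>t. integral {0..t} (\<lambda>s. F (p n s)))"
      by (rule indefinite_integral_continuous_1, rule integrable_continuous_interval, rule contFc[OF Suc])
    then show ?case by (simp add: p_def continuous_on_add)
  qed
  have intg: "(\<lambda>s. F (p n s)) integrable_on {0..t}" for n t
    by (rule integrable_continuous_interval, rule contFc[OF cont])
  have bnd: "norm (p (Suc n) t - p n t) \<le> M * L^n * t^(Suc n) / fact (Suc n)" if "0 \<le> t" for n t
    using that
  proof (induction n arbitrary: t)
    case 0
    then show ?case by (simp add: p_def M_def)
  next
    case (Suc n)
    have eq: "p (Suc (Suc n)) t - p (Suc n) t = integral {0..t} (\<lambda>s. F (p (Suc n) s) - F (p n s))"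
    proof -
      have "integral {0..t} (\<lambda>s. F (p (Suc n) s) - F (p n s)) = integral {0..t} (\<lambda>s. F (p (Suc n) s)) - integral {0..t} (\<lambda>s. F (p n s))"
        by (rule integral_diff[OF intg intg])
      then show ?thesis by (simp add: p_def)
    qed
    have hi: "((\<lambda>s. (L * (M * L^n / fact (Suc n))) * s^(Suc n)) has_integral
       (L * (M * L^n / fact (Suc n))) * t^(Suc (Suc n)) / Suc (Suc n)) {0..t}"
      by (rule has_integral_cpow[OF Suc.prems])
    have "norm (integral {0..t} (\<lambda>s. F (p (Suc n) s) - F (p n s))) \<le>
          integral {0..t} (\<lambda>s. (L * (M * L^n / fact (Suc n))) * s^(Suc n))"
    proof (rule integral_norm_bound_integral)
      show "(\<lambda>s. F (p (Suc n) s) - F (p n s)) integrable_on {0..t}"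
        by (rule integrable_diff[OF intg intg])
      show "(\<lambda>s. (L * (M * L^n / fact (Suc n))) * s^(Suc n)) integrable_on {0..t}"
        using hi by blast
      fix s assume s: "s \<in> {0..t}"
      have "norm (F (p (Suc n) s) - F (p n s)) \<le> L * norm (p (Suc n) s - p n s)" by (rule Lip)
      also have "\<dots> \<le> L * (M * L^n * s^(Suc n) / fact (Suc n))"
        using Suc.IH[of s] s Lpos by (intro mult_left_mono) auto
      finally show "norm (F (p (Suc n) s) - F (p n s)) \<le> (L * (M * L^n / fact (Suc n))) * s^(Suc n)"
        by simp
    qed
    also have "\<dots> = (L * (M * L^n / fact (Suc n))) * t^(Suc (Suc n)) / Suc (Suc n)"
      using hi by (rule integral_unique)
    also have "\<dots> = M * L ^ Suc n * t ^ Suc (Suc n) / fact (Suc (Suc n))"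
      by (simp add: field_simps)
    finally show ?case using eq by simp
  qed
  define D where "D i t = p (Suc i) t - p i t" for i t
  define X where "X t = x0 + suminf (\<lambda>i. D i t)" for t
  have psum: "p n t = x0 + (\<Sum>i<n. D i t)" for n t
    unfolding D_def sum_lessThan_telescope[of "\<lambda>i. p i t"] by (simp add: p_def)
  have unif: "uniform_limit {0..b} p X sequentially" for b
  proof -
    define Mb where "Mb i = M / L * (inverse (fact (Suc i)) * (L * b) ^ (Suc i))" for i
    have sm: "summable Mb"
    proof -
      have "summable (\<lambda>i. inverse (fact i) * (L * b) ^ i)" by (rule summable_exp)
      then have "summable (\<lambda>i. inverse (fact (Suc i)) * (L * b) ^ (Suc i))"
        by (subst summable_Suc_iff)
      then show ?thesis unfolding Mb_def by (rule summable_mult)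
    qed
    have "uniform_limit {0..b} (\<lambda>n t. \<Sum>i<n. D i t) (\<lambda>t. suminf (\<lambda>i. D i t)) sequentially"
    proof (rule Weierstrass_m_test[OF _ sm])
      fix n t assume t: "t \<in> {0..b}"
      have "norm (D n t) \<le> M * L^n * t^(Suc n) / fact (Suc n)"
        unfolding D_def using bnd t by auto
      also have "\<dots> \<le> M * L^n * b^(Suc n) / fact (Suc n)"
        using t M0 Lpos by (intro divide_right_mono mult_left_mono power_mono) auto
      also have "\<dots> = Mb n"
        unfolding Mb_def using Lpos by (simp add: field_simps power_mult_distrib)
      finally show "norm (D n t) \<le> Mb n" .
    qed
    from uniform_limit_add[OF uniform_limit_const[where c="\<lambda>_. x0" and S="{0..b}"] this]
    show ?thesis unfolding X_def psum[abs_def] .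
  qed
  have contX: "continuous_on {0..b} X" for b
    by (rule uniform_limit_theorem[OF _ unif]) (auto simp: cont)
  have inteq: "X t = x0 + integral {0..t} (\<lambda>s. F (X s))" if t: "0 \<le> t" for t
  proof -
    have l1: "(\<lambda>n. p (Suc n) t) \<longlonglongrightarrow> X t"
      using tendsto_uniform_limitI[OF unif[of t]] t by (auto intro: LIMSEQ_Suc)
    have l2: "(\<lambda>n. p (Suc n) t) \<longlonglongrightarrow> x0 + integral {0..t} (\<lambda>s. F (X s))"
    proof (rule LIMSEQ_I)
      fix r :: real assume r: "0 < r"
      define e where "e = r / (2 * L * (t + 1))"
      have e: "0 < e" unfolding e_def using r Lpos t by auto
      from uniform_limitD[OF unif[of t] e] obtain N where
        N: "\<And>n. n \<ge> N \<Longrightarrow> \<forall>s\<in>{0..t}. dist (p n s) (X s) < e"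
        unfolding eventually_sequentially by blast
      show "\<exists>N. \<forall>n\<ge>N. norm (p (Suc n) t - (x0 + integral {0..t} (\<lambda>s. F (X s)))) < r"
      proof (intro exI allI impI)
        fix n assume n: "n \<ge> N"
        have iX: "(\<lambda>s. F (X s)) integrable_on {0..t}"
          by (rule integrable_continuous_interval, rule contFc[OF contX])
        have E1: "p (Suc n) t - (x0 + integral {0..t} (\<lambda>s. F (X s))) =
              integral {0..t} (\<lambda>s. F (p n s) - F (X s))"
          by (simp add: p_def integral_diff[OF intg[unfolded p_def] iX])
        have E2: "norm (integral {0..t} (\<lambda>s. F (p n s) - F (X s))) \<le> integral {0..t} (\<lambda>s. L * e)"
        proof (rule integral_norm_bound_integral)
          show "(\<lambda>s. F (p n s) - F (X s)) integrable_on {0..t}" by (rule integrable_diff[OF intg iX])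
          show "(\<lambda>s. L * e) integrable_on {0..t}" by (rule integrable_const_ivl)
          fix s assume s: "s \<in> {0..t}"
          have "norm (F (p n s) - F (X s)) \<le> L * norm (p n s - X s)" by (rule Lip)
          also have "\<dots> \<le> L * e" using N[OF n] s Lpos by (intro mult_left_mono) (auto simp: dist_norm less_imp_le)
          finally show "norm (F (p n s) - F (X s)) \<le> L * e" .
        qed
        have E3: "integral {0..t} (\<lambda>s. L * e) = t * (L * e)" using t by (simp add: mult_ac)
        have E4: "t * (L * e) < r"
        proof -
          have "t * (L * e) = r * (t / (2 * (t + 1)))" proof -
            have "L * e = r / (2 * (t + 1))" unfolding e_def using Lpos by simp
            then show ?thesis by simp
          qed
          also have "\<dots> < r * 1" using r t by (intro mult_strict_left_mono) auto
          finally show ?thesis by simp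
        qed
        show "norm (p (Suc n) t - (x0 + integral {0..t} (\<lambda>s. F (X s)))) < r"
          unfolding E1 using E2 E3 E4 by linarith
      qed
    qed
    show ?thesis using LIMSEQ_unique[OF l1 l2] .
  qed
  have "ode_sol_global F X"
    unfolding ode_sol_global_def
  proof (intro allI impI)
    fix t :: real assume t: "0 \<le> t"
    have "((\<lambda>u. x0 + integral {0..u} (\<lambda>s. F (X s))) has_vector_derivative F (X t)) (at t within {0..t+1})"
    proof -
      have "((\<lambda>u. integral {0..u} (\<lambda>s. F (X s))) has_vector_derivative F (X t)) (at t within {0..t+1})"
        by (rule integral_has_vector_derivative[OF contFc[OF contX]]) (use t in auto)
      from has_vector_derivative_add[OF has_vector_derivative_const[of x0] this] show ?thesis by simp
    qed
    then have "(X has_vector_derivative F (X t)) (at t within {0..t+1})"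
      by (rule has_vector_derivative_transform[rotated 2]) (use t inteq in auto)
    moreover have "at t within {0..t+1} = at t within {0..}"
      by (rule at_within_nhd[of _ "{..<t+1}"]) (use t in auto)
    ultimately show "(X has_vector_derivative F (X t)) (at t within {0..})" by simp
  qed
  moreover have "X 0 = x0" using inteq[of 0] by simp
  ultimately show ?thesis by blast
qed


lemma sym_dot:
  fixes P :: "real^3^3"
  assumes "transpose P = P"
  shows "a \<bullet> (P *v b) = b \<bullet> (P *v a)"
proof -
  have "a \<bullet> (P *v b) = (a v* P) \<bullet> b" by (simp add: dot_lmul_matrix)
  also have "a v* P = transpose P *v a" by simp
  finally show ?thesis using assms by (simp add: inner_commute)
qed

lemma mat_bound:
  fixes P :: "real^3^3"
  shows "\<exists>K>0. \<forall>v. norm (P *v v) \<le> K * norm v \<and> \<bar>v \<bullet> (P *v v)\<bar> \<le> K * (norm v)^2"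
proof -
  obtain K where K: "K > 0" "\<And>v. norm (P *v v) \<le> norm v * K"
    using bounded_linear.pos_bounded[OF matrix_vector_mul_bounded_linear[of P]] by blast
  have "\<bar>v \<bullet> (P *v v)\<bar> \<le> K * (norm v)^2" for v
  proof -
    have "\<bar>v \<bullet> (P *v v)\<bar> \<le> norm v * norm (P *v v)" by (rule Cauchy_Schwarz_ineq2)
    also have "\<dots> \<le> norm v * (norm v * K)" using K(2)[of v] by (intro mult_left_mono) auto
    finally show ?thesis by (simp add: power2_eq_square mult_ac)
  qed
  with K show ?thesis by (auto simp: mult.commute)
qed

lemma pd_lower:
  fixes P :: "real^3^3"
  assumes "pos_def P"
  shows "\<exists>l>0. \<forall>v. l * (norm v)^2 \<le> v \<bullet> (P *v v)"
proof -
  have pd: "\<And>v. v \<noteq> 0 \<Longrightarrow> v \<bullet> (P *v v) > 0" using assms unfolding pos_def_def by auto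
  have cont: "continuous_on (sphere 0 1) (\<lambda>v::real^3. v \<bullet> (P *v v))"
    by (intro continuous_intros linear_continuous_on matrix_vector_mul_bounded_linear)
  have ne: "sphere (0::real^3) 1 \<noteq> {}" by simp
  obtain u where u: "u \<in> sphere 0 1" and umin: "\<And>v. v \<in> sphere 0 1 \<Longrightarrow> u \<bullet> (P *v u) \<le> v \<bullet> (P *v v)"
    using continuous_attains_inf[OF compact_sphere ne cont] by blast
  have "u \<noteq> 0" using u by auto
  then have l: "u \<bullet> (P *v u) > 0" by (rule pd)
  have "u \<bullet> (P *v u) * (norm v)^2 \<le> v \<bullet> (P *v v)" for v
  proof (cases "v = 0")
    case True then show ?thesis by simp
  next
    case False
    define w where "w = (1 / norm v) *\<^sub>R v"
    have "w \<in> sphere 0 1" using False unfolding w_def by auto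
    then have "u \<bullet> (P *v u) \<le> w \<bullet> (P *v w)" by (rule umin)
    also have "w \<bullet> (P *v w) = (v \<bullet> (P *v v)) / (norm v)^2"
      unfolding w_def by (simp add: matrix_vector_mult_scaleR power2_eq_square)
    finally show ?thesis using False by (simp add: pos_le_divide_eq)
  qed
  with l show ?thesis by blast
qed

lemma V_deriv:
  fixes P :: "real^3^3" and x :: "real \<Rightarrow> real^3"
  assumes "transpose P = P"
    and "(x has_vector_derivative x') (at t within S)"
  shows "((\<lambda>t. (x t - xe) \<bullet> (P *v (x t - xe))) has_real_derivative 2 * ((x t - xe) \<bullet> (P *v x'))) (at t within S)"
proof -
  have d1: "((\<lambda>t. x t - xe) has_derivative (\<lambda>h. h *\<^sub>R x')) (at t within S)"
    using assms(2) unfolding has_vector_derivative_def by (auto intro!: derivative_eq_intros)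
  have d2: "((\<lambda>t. P *v (x t - xe)) has_derivative (\<lambda>h. P *v (h *\<^sub>R x'))) (at t within S)"
    by (rule bounded_linear.has_derivative[OF matrix_vector_mul_bounded_linear d1])
  have "((\<lambda>t. (x t - xe) \<bullet> (P *v (x t - xe))) has_derivative
      (\<lambda>h. (x t - xe) \<bullet> (P *v (h *\<^sub>R x')) + (h *\<^sub>R x') \<bullet> (P *v (x t - xe)))) (at t within S)"
    by (rule has_derivative_inner[OF d1 d2])
  moreover have "(\<lambda>h. (x t - xe) \<bullet> (P *v (h *\<^sub>R x')) + (h *\<^sub>R x') \<bullet> (P *v (x t - xe))) =
      (*) (2 * ((x t - xe) \<bullet> (P *v x')))"
  proof (rule ext)
    fix h :: real
    have "(h *\<^sub>R x') \<bullet> (P *v (x t - xe)) = (x t - xe) \<bullet> (P *v (h *\<^sub>R x'))" by (rule sym_dot[OF assms(1)])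
    then show "(x t - xe) \<bullet> (P *v (h *\<^sub>R x')) + (h *\<^sub>R x') \<bullet> (P *v (x t - xe)) = 2 * ((x t - xe) \<bullet> (P *v x')) * h"
      by (simp add: matrix_vector_mult_scaleR)
  qed
  ultimately show ?thesis unfolding has_field_derivative_def by simp
qed

lemma mvt_upper:
  fixes g g' :: "real \<Rightarrow> real"
  assumes "a \<le> b"
    and "\<And>t. t \<in> {a..b} \<Longrightarrow> (g has_real_derivative g' t) (at t within S)"
    and "{a..b} \<subseteq> S"
    and "\<And>t. t \<in> {a..b} \<Longrightarrow> g' t \<le> K"
  shows "g b - g a \<le> K * (b - a)"
proof -
  have "\<exists>t\<in>{a..b}. g b - g a = (\<lambda>h. g' t * h) (b - a)"
    apply (rule mvt_very_simple[OF assms(1)])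
    using assms(2,3) has_field_derivative_def has_derivative_subset by (metis atLeastAtMost_iff)
  then obtain t where t: "t \<in> {a..b}" "g b - g a = g' t * (b - a)" by auto
  then show ?thesis using assms(1) assms(4)[OF t(1)] by (simp add: mult_right_mono)
qed

lemma mvt_lower:
  fixes g g' :: "real \<Rightarrow> real"
  assumes "a \<le> b"
    and "\<And>t. t \<in> {a..b} \<Longrightarrow> (g has_real_derivative g' t) (at t within S)"
    and "{a..b} \<subseteq> S"
    and "\<And>t. t \<in> {a..b} \<Longrightarrow> K \<le> g' t"
  shows "K * (b - a) \<le> g b - g a"
proof -
  have "\<exists>t\<in>{a..b}. g b - g a = (\<lambda>h. g' t * h) (b - a)"
    apply (rule mvt_very_simple[OF assms(1)])
    using assms(2,3) has_field_derivative_def has_derivative_subset by (metis atLeastAtMost_iff)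
  then obtain t where t: "t \<in> {a..b}" "g b - g a = g' t * (b - a)" by auto
  then show ?thesis using assms(1) assms(4)[OF t(1)] by (simp add: mult_right_mono)
qed

lemma lyap_core:
  fixes f :: "real^3 \<Rightarrow> real^3" and P :: "real^3^3" and x :: "real \<Rightarrow> real^3"
  assumes Psym: "transpose P = P"
    and KP: "\<And>v. v \<bullet> (P *v v) \<le> Kp * (norm v)^2" and Kp: "Kp > 0"
    and dec: "\<And>z. norm (z - xe) \<le> r \<Longrightarrow> 2 * ((z - xe) \<bullet> (P *v f z)) \<le> - c * (norm (z - xe))^2"
    and c: "c > 0"
    and sub: "\<And>z. (z - xe) \<bullet> (P *v (z - xe)) \<le> \<rho> \<Longrightarrow> norm (z - xe) < r"
    and sol: "ode_sol_on f x T"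
    and x0: "(x 0 - xe) \<bullet> (P *v (x 0 - xe)) \<le> \<rho>"
  shows "\<forall>t\<in>{0..<T}. (1 + c / Kp * t) * ((x t - xe) \<bullet> (P *v (x t - xe))) \<le> (x 0 - xe) \<bullet> (P *v (x 0 - xe))"
proof -
  define g where "g t = (x t - xe) \<bullet> (P *v (x t - xe))" for t
  define g' where "g' t = 2 * ((x t - xe) \<bullet> (P *v f (x t)))" for t
  have xd: "(x has_vector_derivative f (x t)) (at t within {0..<T})" if "t \<in> {0..<T}" for t
    using sol that unfolding ode_sol_on_def by blast
  have gd: "(g has_real_derivative g' t) (at t within {0..<T})" if "t \<in> {0..<T}" for t
    unfolding g_def g'_def by (rule V_deriv[OF Psym xd[OF that]])
  have contx: "continuous_on {0..<T} x" by (rule continuous_on_vector_derivative[OF xd])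
  have c1: "continuous_on {0..<T} (\<lambda>t. x t - xe)" by (intro continuous_intros contx)
  have c2: "continuous_on {0..<T} (\<lambda>t. P *v (x t - xe))"
    using bounded_linear.continuous_on[OF matrix_vector_mul_bounded_linear c1] .
  have contg: "continuous_on {0..<T} g"
    unfolding g_def by (rule continuous_on_inner[OF c1 c2])
  have g'le: "g' t \<le> - c * (norm (x t - xe))^2" if "norm (x t - xe) \<le> r" for t
    unfolding g'_def using dec[OF that] .
  have mono: "g t \<le> g s" if "0 \<le> s" "s \<le> t" "t < T" "\<And>u. u \<in> {s..t} \<Longrightarrow> norm (x u - xe) \<le> r" for s t
  proof -
    have "g t - g s \<le> 0 * (t - s)"
    proof (rule mvt_upper[OF that(2), where S="{0..<T}" and g'=g'])
      show "\<And>u. u \<in> {s..t} \<Longrightarrow> (g has_real_derivative g' u) (at u within {0..<T})"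
        using gd that by auto
      show "{s..t} \<subseteq> {0..<T}" using that by auto
      fix u assume "u \<in> {s..t}"
      then have "g' u \<le> - c * (norm (x u - xe))^2" using g'le that(4) by blast
      also have "\<dots> \<le> 0" using c by simp
      finally show "g' u \<le> 0" .
    qed
    then show ?thesis by simp
  qed
  have stay: "\<forall>t\<in>{0..<T}. norm (x t - xe) < r"
  proof (rule ccontr)
    assume "\<not> ?thesis"
    then obtain t1 where t1: "t1 \<in> {0..<T}" "r \<le> norm (x t1 - xe)" by force
    define B where "B = {t\<in>{0..<T}. r \<le> norm (x t - xe)}"
    define \<tau> where "\<tau> = Inf B"
    have Bne: "B \<noteq> {}" using t1 unfolding B_def by blast
    have Bbdd: "bdd_below B" unfolding B_def by (rule bdd_belowI[of _ 0]) auto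
    have tau0: "0 \<le> \<tau>" unfolding \<tau>_def by (rule cInf_greatest[OF Bne]) (auto simp: B_def)
    have taut1: "\<tau> \<le> t1" unfolding \<tau>_def by (rule cInf_lower[OF _ Bbdd]) (use t1 in \<open>auto simp: B_def\<close>)
    have tauT: "\<tau> < T" using taut1 t1 by auto
    have before: "norm (x s - xe) < r" if "0 \<le> s" "s < \<tau>" for s
    proof (rule ccontr)
      assume "\<not> norm (x s - xe) < r"
      then have "s \<in> B" unfolding B_def using that tauT by auto
      then have "\<tau> \<le> s" unfolding \<tau>_def by (rule cInf_lower[OF _ Bbdd])
      with that show False by simp
    qed
    have gle: "g s \<le> g 0" if "0 \<le> s" "s < \<tau>" for s
      by (rule mono) (use that tauT before in \<open>auto intro: less_imp_le\<close>)
    have gtau: "g \<tau> \<le> g 0"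
    proof (cases "\<tau> = 0")
      case True then show ?thesis by simp
    next
      case False
      then have tpos: "0 < \<tau>" using tau0 by simp
      have cl: "closure {0..<\<tau>} = {0..\<tau>}" using tpos by simp
      have cc: "continuous_on (closure {0..<\<tau>}) g"
        unfolding cl by (rule continuous_on_subset[OF contg]) (use tauT in auto)
      have tc: "\<tau> \<in> closure {0..<\<tau>}" unfolding cl using tau0 by simp
      show ?thesis
        by (rule continuous_le_on_closure[OF cc tc]) (use gle in auto)
    qed
    then have "g \<tau> \<le> \<rho>" using x0 unfolding g_def by simp
    then have tin: "norm (x \<tau> - xe) < r" using sub unfolding g_def by blast
    have "continuous (at \<tau> within {0..<T}) (\<lambda>s. norm (x s - xe))"
      using contx tau0 tauT by (intro continuous_intros) (auto simp: continuous_on_eq_continuous_within)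
    then have "((\<lambda>s. norm (x s - xe)) \<longlongrightarrow> norm (x \<tau> - xe)) (at \<tau> within {0..<T})"
      by (simp add: continuous_within)
    from order_tendstoD(2)[OF this tin]
    obtain d where d: "d > 0" "\<And>s. s \<in> {0..<T} \<Longrightarrow> s \<noteq> \<tau> \<Longrightarrow> dist s \<tau> < d \<Longrightarrow> norm (x s - xe) < r"
      unfolding eventually_at by blast
    have "\<tau> + d \<le> \<tau>" unfolding \<tau>_def[symmetric]
    proof -
      have "\<tau> + d \<le> Inf B"
      proof (rule cInf_greatest[OF Bne])
        fix b assume b: "b \<in> B"
        then have bt: "\<tau> \<le> b" unfolding \<tau>_def by (rule cInf_lower[OF _ Bbdd])
        have "b \<noteq> \<tau>" using b tin unfolding B_def by auto
        show "\<tau> + d \<le> b"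
        proof (rule ccontr)
          assume "\<not> \<tau> + d \<le> b"
          then have "norm (x b - xe) < r" using d(2)[of b] b bt \<open>b \<noteq> \<tau>\<close> unfolding B_def by (auto simp: dist_real_def)
          then show False using b unfolding B_def by auto
        qed
      qed
      then show ?thesis unfolding \<tau>_def .
    qed
    then show False using d by simp
  qed
  show ?thesis
  proof
    fix t assume t: "t \<in> {0..<T}"
    have gmono: "g t \<le> g s" if "s \<in> {0..t}" for s
      by (rule mono) (use that t stay in \<open>auto intro: less_imp_le\<close>)
    have "g t - g 0 \<le> (- c / Kp * g t) * (t - 0)"
    proof (rule mvt_upper[where S="{0..<T}" and g'=g'])
      show "0 \<le> t" using t by simp
      show "\<And>u. u \<in> {0..t} \<Longrightarrow> (g has_real_derivative g' u) (at u within {0..<T})"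
        using gd t by auto
      show "{0..t} \<subseteq> {0..<T}" using t by auto
      fix u assume u: "u \<in> {0..t}"
      have nu: "norm (x u - xe) \<le> r" using stay u t by (auto intro: less_imp_le)
      have "g' u \<le> - c * (norm (x u - xe))^2" by (rule g'le[OF nu])
      also have "\<dots> \<le> - c / Kp * g u"
      proof -
        have "g u \<le> Kp * (norm (x u - xe))^2" unfolding g_def by (rule KP)
        then have "c / Kp * g u \<le> c / Kp * (Kp * (norm (x u - xe))^2)"
          using c Kp by (intro mult_left_mono) auto
        also have "\<dots> = c * (norm (x u - xe))^2" using Kp by simp
        finally show ?thesis by simp
      qed
      also have "\<dots> \<le> - c / Kp * g t"
        using gmono[OF u] c Kp by (simp add: divide_simps mult_left_mono)
      finally show "g' u \<le> - c / Kp * g t" .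
    qed
    then have "(1 + c / Kp * t) * g t \<le> g 0" by (simp add: algebra_simps)
    then show "(1 + c / Kp * t) * ((x t - xe) \<bullet> (P *v (x t - xe))) \<le> (x 0 - xe) \<bullet> (P *v (x 0 - xe))"
      by (simp add: g_def)
  qed
qed



lemma mat_neg_mult: "(- Q) *v e = - (Q *v (e::real^'n))" for Q :: "real^'n^'m"
  by (simp add: vec_eq_iff matrix_vector_mult_def sum_negf)

lemma transpose_dot:
  fixes A :: "real^3^3"
  shows "e \<bullet> (transpose A *v y) = (A *v e) \<bullet> y"
proof -
  have "e \<bullet> (transpose A *v y) = e \<bullet> (y v* A)" by simp
  also have "\<dots> = (y v* A) \<bullet> e" by (simp add: inner_commute)
  also have "\<dots> = y \<bullet> (A *v e)" by (rule dot_lmul_matrix)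
  finally show ?thesis by (simp add: inner_commute)
qed

lemma quad_lyap:
  fixes A P M :: "real^3^3"
  assumes "transpose P = P" "transpose A ** P + P ** A = M"
  shows "2 * (e \<bullet> (P *v (A *v e))) = e \<bullet> (M *v e)"
proof -
  have "e \<bullet> (M *v e) = e \<bullet> ((transpose A ** P) *v e) + e \<bullet> ((P ** A) *v e)"
    using assms(2)[symmetric] by (simp add: matrix_vector_mult_add_rdistrib inner_add_right)
  also have "e \<bullet> ((transpose A ** P) *v e) = (A *v e) \<bullet> (P *v e)"
  proof -
    have "(transpose A ** P) *v e = transpose A *v (P *v e)" by (simp only: matrix_vector_mul_assoc)
    then show ?thesis by (simp only: transpose_dot)
  qed
  also have "\<dots> = e \<bullet> (P *v (A *v e))" using sym_dot[OF assms(1), of e "A *v e"] by (simp add: inner_commute)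
  also have "e \<bullet> ((P ** A) *v e) = e \<bullet> (P *v (A *v e))" by (simp add: matrix_vector_mul_assoc)
  finally show ?thesis by simp
qed

lemma ode_sol_global_on:
  assumes "ode_sol_global f x"
  shows "ode_sol_on f x T"
  unfolding ode_sol_on_def
proof
  fix t assume t: "t \<in> {0..<T}"
  then have "(x has_vector_derivative f (x t)) (at t within {0..})" using assms unfolding ode_sol_global_def by auto
  then show "(x has_vector_derivative f (x t)) (at t within {0..<T})"
    by (rule has_vector_derivative_within_subset) auto
qed

lemma lip_extend:
  fixes f :: "real^3 \<Rightarrow> real^3"
  assumes L: "\<forall>a\<in>cball xe r. \<forall>b\<in>cball xe r. norm (f a - f b) \<le> L * norm (a - b)" and "L > 0" and "r \<ge> 0"
  shows "\<forall>a b. norm (f (closest_point (cball xe r) a) - f (closest_point (cball xe r) b))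
      \<le> L * norm (a - b)"
proof (intro allI)
  fix a b :: "real^3"
  let ?S = "cball xe r"
  have ne: "?S \<noteq> {}" using assms(3) by auto
  have in1: "closest_point ?S a \<in> ?S" "closest_point ?S b \<in> ?S"
    using closest_point_in_set[OF closed_cball ne] by auto
  have "norm (f (closest_point ?S a) - f (closest_point ?S b)) \<le> L * norm (closest_point ?S a - closest_point ?S b)"
    using L in1 by blast
  also have "\<dots> \<le> L * norm (a - b)"
    using closest_point_lipschitz[OF convex_cball closed_cball ne, of a b] assms(2)
    by (intro mult_left_mono) (auto simp: dist_norm)
  finally show "norm (f (closest_point ?S a) - f (closest_point ?S b)) \<le> L * norm (a - b)" .
qed

lemma sqrt_bound_tendsto:
  fixes x :: "real \<Rightarrow> real^3"
  assumes "\<And>t. t \<ge> 0 \<Longrightarrow> (norm (x t - xe))^2 \<le> W / (l * (1 + k * t))"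
    and "l > 0" "k > 0" "W \<ge> 0"
  shows "(x \<longlongrightarrow> xe) at_top"
proof (rule tendstoI)
  fix e :: real assume e: "e > 0"
  define N where "N = W / (l * e^2 * k) + 1"
  have "l * e^2 * k > 0" using assms e by simp
  then have "W / (l * e^2 * k) \<ge> 0" using assms by simp
  then have N0: "N > 0" unfolding N_def by simp
  show "\<forall>\<^sub>F t in at_top. dist (x t) xe < e"
    unfolding eventually_at_top_linorder
  proof (intro exI allI impI)
    fix t assume t: "t \<ge> N"
    then have t0: "t \<ge> 0" using N0 by simp
    have "k * t \<ge> 0" using assms t0 by simp
    then have pos: "l * (1 + k * t) > 0" using assms by (intro mult_pos_pos) auto
    have "W / (l * e^2 * k) < t" using t unfolding N_def by simp
    then have "W < t * (l * e^2 * k)" using assms e by (simp add: divide_less_eq)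
    moreover have "e^2 * (l * (1 + k * t)) = e^2 * l + t * (l * e^2 * k)" by (simp add: algebra_simps)
    moreover have "0 \<le> e^2 * l" using assms by simp
    ultimately have "W < e^2 * (l * (1 + k * t))" by linarith
    then have "W / (l * (1 + k * t)) < e^2" using pos by (simp add: divide_less_eq)
    then have "(norm (x t - xe))^2 < e^2" using assms(1)[OF t0] by simp
    then have "norm (x t - xe) < e" using e by (simp add: power_less_imp_less_base)
    then show "dist (x t) xe < e" by (simp add: dist_norm)
  qed
qed

theorem lyap_stab_thm:
  fixes f :: "real^3 \<Rightarrow> real^3" and A P Q :: "real^3^3"
  assumes feq: "f xe = 0"
    and fd: "(f has_derivative (\<lambda>h. A *v h)) (at xe)"
    and Ppd: "pos_def P" and Qpd: "pos_def Q"
    and lyap: "transpose A ** P + P ** A = - Q"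
    and lip: "\<And>R. \<exists>L>0. \<forall>a\<in>cball xe R. \<forall>b\<in>cball xe R. norm (f a - f b) \<le> L * norm (a - b)"
  shows "(\<exists>\<rho>0>0. \<forall>\<rho>. 0 < \<rho> \<and> \<rho> \<le> \<rho>0 \<longrightarrow> {z. (z - xe) \<bullet> (P *v (z - xe)) \<le> \<rho>} \<subseteq> domain_of_attraction f xe)
     \<and> lyap_stable f xe \<and> (\<exists>\<eta>>0. ball xe \<eta> \<subseteq> domain_of_attraction f xe)"
proof -
  define V where "V z = (z - xe) \<bullet> (P *v (z - xe))" for z
  have Psym: "transpose P = P" using Ppd unfolding pos_def_def by simp
  obtain l where l: "l > 0" "\<And>v. l * (norm v)^2 \<le> v \<bullet> (P *v v)" using pd_lower[OF Ppd] by blast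
  obtain q where q: "q > 0" "\<And>v. q * (norm v)^2 \<le> v \<bullet> (Q *v v)" using pd_lower[OF Qpd] by blast
  obtain Kp where Kp: "Kp > 0" "\<And>v. norm (P *v v) \<le> Kp * norm v" "\<And>v. \<bar>v \<bullet> (P *v v)\<bar> \<le> Kp * (norm v)^2"
    using mat_bound[of P] by blast
  have KpV: "v \<bullet> (P *v v) \<le> Kp * (norm v)^2" for v using Kp(3)[of v] by simp
  have quad: "2 * (e \<bullet> (P *v (A *v e))) = - (e \<bullet> (Q *v e))" for e
    using quad_lyap[OF Psym lyap, of e] by (simp add: mat_neg_mult)
  define \<epsilon> where "\<epsilon> = q / (4 * Kp)"
  have \<epsilon>: "\<epsilon> > 0" unfolding \<epsilon>_def using q Kp by simp
  obtain d where d: "d > 0" "\<And>y. norm (y - xe) < d \<Longrightarrow> norm (f y - f xe - A *v (y - xe)) \<le> \<epsilon> * norm (y - xe)"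
    using fd[unfolded has_derivative_at_alt] \<epsilon> by blast
  define r where "r = d / 2"
  have r: "r > 0" unfolding r_def using d by simp
  define c where "c = q / 2"
  have c: "c > 0" unfolding c_def using q by simp
  have dec: "2 * ((z - xe) \<bullet> (P *v f z)) \<le> - c * (norm (z - xe))^2" if z: "norm (z - xe) \<le> r" for z
  proof -
    define e where "e = z - xe"
    define R where "R = f z - A *v e"
    have Rb: "norm R \<le> \<epsilon> * norm e" using d(2)[of z] z r unfolding R_def e_def r_def by (simp add: feq)
    have fz: "f z = A *v e + R" unfolding R_def by simp
    have "2 * (e \<bullet> (P *v f z)) = 2 * (e \<bullet> (P *v (A *v e))) + 2 * (e \<bullet> (P *v R))"
      by (simp add: fz matrix_vector_right_distrib inner_add_right)
    also have "\<dots> = - (e \<bullet> (Q *v e)) + 2 * (e \<bullet> (P *v R))" using quad by simp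
    also have "\<dots> \<le> - (q * (norm e)^2) + 2 * (norm e * (Kp * (\<epsilon> * norm e)))"
    proof -
      have "e \<bullet> (P *v R) \<le> norm e * norm (P *v R)" by (rule norm_cauchy_schwarz)
      also have "\<dots> \<le> norm e * (Kp * (\<epsilon> * norm e))"
      proof (rule mult_left_mono)
        have "norm (P *v R) \<le> Kp * norm R" by (rule Kp(2))
        also have "\<dots> \<le> Kp * (\<epsilon> * norm e)" using Rb Kp by (intro mult_left_mono) auto
        finally show "norm (P *v R) \<le> Kp * (\<epsilon> * norm e)" .
      qed simp
      finally show ?thesis using q(2)[of e] by linarith
    qed
    also have "\<dots> = - c * (norm e)^2" unfolding c_def \<epsilon>_def using Kp by (simp add: power2_eq_square field_simps)
    finally show ?thesis unfolding e_def .
  qed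
  define \<rho>0 where "\<rho>0 = l * r^2 / 2"
  have \<rho>0: "\<rho>0 > 0" unfolding \<rho>0_def using l r by simp
  have V0: "V z \<ge> 0" for z
  proof -
    have "0 \<le> l * (norm (z - xe))^2" using l(1) by simp
    then show ?thesis using l(2)[of "z - xe"] unfolding V_def by linarith
  qed
  have sub: "norm (z - xe) < r" if "V z \<le> \<rho>" "\<rho> \<le> \<rho>0" for z \<rho>
  proof -
    have "l * (norm (z - xe))^2 \<le> l * r^2 / 2" using l(2)[of "z - xe"] that unfolding V_def \<rho>0_def by simp
    then have "l * (norm (z - xe))^2 \<le> l * (r^2 / 2)" by simp
    then have "(norm (z - xe))^2 \<le> r^2 / 2" using l(1) by (rule mult_left_le_imp_le)
    moreover have "r^2 > 0" using r by simp
    ultimately have "(norm (z - xe))^2 < r^2" by linarith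
    then show ?thesis using r by (simp add: power_less_imp_less_base)
  qed
  define \<kappa> where "\<kappa> = c / Kp"
  have \<kappa>: "\<kappa> > 0" unfolding \<kappa>_def using c Kp by simp
  have decay: "\<forall>t\<in>{0..<T}. (1 + \<kappa> * t) * V (x t) \<le> V (x 0)"
    if sol: "ode_sol_on g x T" and V0r: "V (x 0) \<le> \<rho>" and rr: "\<rho> \<le> \<rho>0"
      and gdec: "\<And>z. norm (z - xe) \<le> r \<Longrightarrow> 2 * ((z - xe) \<bullet> (P *v g z)) \<le> - c * (norm (z - xe))^2"
    for g x T \<rho>
  proof -
    have s: "\<And>z. (z - xe) \<bullet> (P *v (z - xe)) \<le> \<rho> \<Longrightarrow> norm (z - xe) < r"
      using sub[OF _ rr] unfolding V_def by blast
    have "\<forall>t\<in>{0..<T}. (1 + c / Kp * t) * ((x t - xe) \<bullet> (P *v (x t - xe))) \<le> (x 0 - xe) \<bullet> (P *v (x 0 - xe))"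
      using lyap_core[where r=r and \<rho>=\<rho>, OF Psym KpV Kp(1) gdec c s sol] V0r unfolding V_def by simp
    then show ?thesis unfolding V_def \<kappa>_def .
  qed
  have decay2: "V (x t) \<le> V (x 0)" "l * (norm (x t - xe))^2 \<le> V (x 0) / (1 + \<kappa> * t)"
    if sol: "ode_sol_on f x T" and V0r: "V (x 0) \<le> \<rho>" and rr: "\<rho> \<le> \<rho>0" and t: "t \<in> {0..<T}"
    for x T \<rho> t
  proof -
    have h: "(1 + \<kappa> * t) * V (x t) \<le> V (x 0)" using decay[OF sol V0r rr dec] t by blast
    have pos: "1 + \<kappa> * t \<ge> 1" using \<kappa> t by simp
    have "1 * V (x t) \<le> (1 + \<kappa> * t) * V (x t)" by (rule mult_right_mono[OF pos V0])
    then show "V (x t) \<le> V (x 0)" using h by simp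
    have "l * (norm (x t - xe))^2 \<le> V (x t)" using l(2)[of "x t - xe"] unfolding V_def .
    also have "V (x t) \<le> V (x 0) / (1 + \<kappa> * t)" using h pos by (simp add: le_divide_eq mult.commute)
    finally show "l * (norm (x t - xe))^2 \<le> V (x 0) / (1 + \<kappa> * t)" .
  qed
  have doa: "z0 \<in> domain_of_attraction f xe" if z0: "V z0 \<le> \<rho>0" for z0
  proof -
    obtain L where L: "L > 0" "\<forall>a\<in>cball xe r. \<forall>b\<in>cball xe r. norm (f a - f b) \<le> L * norm (a - b)"
      using lip[of r] by blast
    define F where "F z = f (closest_point (cball xe r) z)" for z
    have FL: "\<And>a b. norm (F a - F b) \<le> L * norm (a - b)"
      using lip_extend[OF L(2) L(1)] r unfolding F_def by auto
    obtain y where y: "ode_sol_global F y" "y 0 = z0" using picard_global[OF FL L(1)] by blast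
    have Ff: "F z = f z" if "norm (z - xe) \<le> r" for z
      unfolding F_def using that by (subst closest_point_self) (auto simp: dist_norm norm_minus_commute)
    have Fdec: "2 * ((z - xe) \<bullet> (P *v F z)) \<le> - c * (norm (z - xe))^2" if "norm (z - xe) \<le> r" for z
      using dec[OF that] Ff[OF that] by simp
    have ystay: "norm (y t - xe) < r" if t: "t \<ge> 0" for t
    proof -
      have "\<forall>s\<in>{0..<t+1}. (1 + \<kappa> * s) * V (y s) \<le> V (y 0)"
        by (rule decay[OF ode_sol_global_on[OF y(1)] _ order_refl Fdec]) (use y(2) z0 in auto)
      then have "(1 + \<kappa> * t) * V (y t) \<le> V (y 0)" using t by auto
      moreover have "1 * V (y t) \<le> (1 + \<kappa> * t) * V (y t)" using \<kappa> t by (intro mult_right_mono[OF _ V0]) simp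
      ultimately have "V (y t) \<le> V (y 0)" by simp
      then have "V (y t) \<le> \<rho>0" using y(2) z0 by simp
      then show ?thesis using sub[OF _ order_refl] by blast
    qed
    have yf: "ode_sol_global f y"
      unfolding ode_sol_global_def
    proof (intro allI impI)
      fix t :: real assume t: "0 \<le> t"
      have "(y has_vector_derivative F (y t)) (at t within {0..})" using y(1) t unfolding ode_sol_global_def by auto
      then show "(y has_vector_derivative f (y t)) (at t within {0..})" using Ff ystay[OF t] by simp
    qed
    have conv: "(x \<longlongrightarrow> xe) at_top" if x: "ode_sol_global f x" "x 0 = z0" for x
    proof (rule sqrt_bound_tendsto[where x=x and W="V z0", OF _ l(1) \<kappa>])
      show "V z0 \<ge> 0" by (rule V0)
      fix t :: real assume t: "t \<ge> 0"
      have "l * (norm (x t - xe))^2 \<le> V (x 0) / (1 + \<kappa> * t)"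
      proof -
        have "V (x 0) \<le> \<rho>0" using x(2) z0 by simp
        then show ?thesis by (rule decay2(2)[where T="t+1", OF ode_sol_global_on[OF x(1)] _ order_refl]) (use t in simp)
      qed
      then have "(norm (x t - xe))^2 * l \<le> V z0 / (1 + \<kappa> * t)" using x(2) by (simp add: mult.commute)
      then have "(norm (x t - xe))^2 \<le> (V z0 / (1 + \<kappa> * t)) / l" by (simp only: pos_le_divide_eq[OF l(1)])
      then show "(norm (x t - xe))^2 \<le> V z0 / (l * (1 + \<kappa> * t))"
        by (simp add: divide_divide_eq_left mult.commute)
    qed
    show ?thesis unfolding domain_of_attraction_def using yf y(2) conv by blast
  qed
  have part1: "\<forall>\<rho>. 0 < \<rho> \<and> \<rho> \<le> \<rho>0 \<longrightarrow> {z. (z - xe) \<bullet> (P *v (z - xe)) \<le> \<rho>} \<subseteq> domain_of_attraction f xe"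
  proof (intro allI impI subsetI)
    fix \<rho> z assume "0 < \<rho> \<and> \<rho> \<le> \<rho>0" "z \<in> {z. (z - xe) \<bullet> (P *v (z - xe)) \<le> \<rho>}"
    then have "V z \<le> \<rho>0" by (simp add: V_def)
    then show "z \<in> domain_of_attraction f xe" by (rule doa)
  qed
  have ballV: "V z < \<rho>" if "norm (z - xe) < sqrt (\<rho> / Kp)" "\<rho> > 0" for z \<rho>
  proof -
    have "V z \<le> Kp * (norm (z - xe))^2" unfolding V_def by (rule KpV)
    also have "\<dots> < Kp * (sqrt (\<rho> / Kp))^2"
      using that Kp by (intro mult_strict_left_mono power_strict_mono) auto
    also have "\<dots> = \<rho>" using that Kp by simp
    finally show ?thesis .
  qed
  have part3: "\<exists>\<eta>>0. ball xe \<eta> \<subseteq> domain_of_attraction f xe"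
  proof (intro exI conjI)
    show "sqrt (\<rho>0 / Kp) > 0" using \<rho>0 Kp by simp
    show "ball xe (sqrt (\<rho>0 / Kp)) \<subseteq> domain_of_attraction f xe"
    proof
      fix z assume "z \<in> ball xe (sqrt (\<rho>0 / Kp))"
      then have "norm (z - xe) < sqrt (\<rho>0 / Kp)" by (simp add: dist_norm norm_minus_commute)
      then have "V z < \<rho>0" using ballV[of z \<rho>0] \<rho>0 by simp
      then show "z \<in> domain_of_attraction f xe" using doa by simp
    qed
  qed
  have part2: "lyap_stable f xe"
    unfolding lyap_stable_def
  proof (intro allI impI)
    fix e :: real assume e: "e > 0"
    define \<rho>' where "\<rho>' = min \<rho>0 (l * e^2 / 2)"
    have \<rho>': "\<rho>' > 0" "\<rho>' \<le> \<rho>0" "\<rho>' \<le> l * e^2 / 2" unfolding \<rho>'_def using \<rho>0 l e by auto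
    show "\<exists>\<delta>>0. \<forall>x T. ode_sol_on f x T \<and> dist (x 0) xe < \<delta> \<longrightarrow> (\<forall>t\<in>{0..<T}. dist (x t) xe < e)"
    proof (intro exI conjI allI impI ballI)
      show "sqrt (\<rho>' / Kp) > 0" using \<rho>' Kp by simp
      fix x T t assume H: "ode_sol_on f x T \<and> dist (x 0) xe < sqrt (\<rho>' / Kp)" and t: "t \<in> {0..<T}"
      have "V (x 0) < \<rho>'" using ballV[of "x 0" \<rho>'] H \<rho>' by (simp add: dist_norm)
      then have "V (x t) \<le> V (x 0)" using decay2(1)[of x T \<rho>' t] H \<rho>' t by auto
      then have "l * (norm (x t - xe))^2 \<le> l * e^2 / 2"
        using l(2)[of "x t - xe"] \<open>V (x 0) < \<rho>'\<close> \<rho>' unfolding V_def by linarith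
      then have "l * (norm (x t - xe))^2 \<le> l * (e^2 / 2)" by simp
      then have "(norm (x t - xe))^2 \<le> e^2 / 2" using l(1) by (rule mult_left_le_imp_le)
      moreover have "e^2 > 0" using e by simp
      ultimately have "(norm (x t - xe))^2 < e^2" by linarith
      then have "norm (x t - xe) < e" using e by (simp add: power_less_imp_less_base)
      then show "dist (x t) xe < e" by (simp add: dist_norm)
    qed
  qed
  show ?thesis using part1 part2 part3 \<rho>0 by blast
qed



theorem unstab_thm:
  fixes f :: "real^3 \<Rightarrow> real^3" and A P Q :: "real^3^3"
  assumes feq: "f xe = 0"
    and fd: "(f has_derivative (\<lambda>h. A *v h)) (at xe)"
    and Psym: "transpose P = P" and Qpd: "pos_def Q"
    and lyap: "transpose A ** P + P ** A = Q"
    and vpos: "v \<bullet> (P *v v) > 0"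
    and lip: "\<And>R. \<exists>L>0. \<forall>a\<in>cball xe R. \<forall>b\<in>cball xe R. norm (f a - f b) \<le> L * norm (a - b)"
  shows "unstable f xe"
proof -
  define V where "V z = (z - xe) \<bullet> (P *v (z - xe))" for z
  obtain q where q: "q > 0" "\<And>v. q * (norm v)^2 \<le> v \<bullet> (Q *v v)" using pd_lower[OF Qpd] by blast
  obtain Kp where Kp: "Kp > 0" "\<And>v. norm (P *v v) \<le> Kp * norm v" "\<And>v. \<bar>v \<bullet> (P *v v)\<bar> \<le> Kp * (norm v)^2"
    using mat_bound[of P] by blast
  have KpV: "v \<bullet> (P *v v) \<le> Kp * (norm v)^2" for v using Kp(3)[of v] by simp
  have quad: "2 * (e \<bullet> (P *v (A *v e))) = e \<bullet> (Q *v e)" for e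
    using quad_lyap[OF Psym lyap, of e] by simp
  define \<epsilon> where "\<epsilon> = q / (4 * Kp)"
  have \<epsilon>: "\<epsilon> > 0" unfolding \<epsilon>_def using q Kp by simp
  obtain d where d: "d > 0" "\<And>y. norm (y - xe) < d \<Longrightarrow> norm (f y - f xe - A *v (y - xe)) \<le> \<epsilon> * norm (y - xe)"
    using fd[unfolded has_derivative_at_alt] \<epsilon> by blast
  define r where "r = d / 2"
  have r: "r > 0" unfolding r_def using d by simp
  define c where "c = q / 2"
  have c: "c > 0" unfolding c_def using q by simp
  have inc: "c * (norm (z - xe))^2 \<le> 2 * ((z - xe) \<bullet> (P *v f z))" if z: "norm (z - xe) \<le> r" for z
  proof -
    define e where "e = z - xe"
    define R where "R = f z - A *v e"
    have Rb: "norm R \<le> \<epsilon> * norm e" using d(2)[of z] z r unfolding R_def e_def r_def by (simp add: feq)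
    have fz: "f z = A *v e + R" unfolding R_def by simp
    have "2 * (e \<bullet> (P *v f z)) = 2 * (e \<bullet> (P *v (A *v e))) + 2 * (e \<bullet> (P *v R))"
      by (simp add: fz matrix_vector_right_distrib inner_add_right)
    also have "\<dots> = (e \<bullet> (Q *v e)) + 2 * (e \<bullet> (P *v R))" using quad by simp
    also have "\<dots> \<ge> (q * (norm e)^2) - 2 * (norm e * (Kp * (\<epsilon> * norm e)))"
    proof -
      have "\<bar>e \<bullet> (P *v R)\<bar> \<le> norm e * norm (P *v R)" by (rule Cauchy_Schwarz_ineq2)
      also have "\<dots> \<le> norm e * (Kp * (\<epsilon> * norm e))"
      proof (rule mult_left_mono)
        have "norm (P *v R) \<le> Kp * norm R" by (rule Kp(2))
        also have "\<dots> \<le> Kp * (\<epsilon> * norm e)" using Rb Kp by (intro mult_left_mono) auto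
        finally show "norm (P *v R) \<le> Kp * (\<epsilon> * norm e)" .
      qed simp
      finally show ?thesis using q(2)[of e] by linarith
    qed
    also have "(q * (norm e)^2) - 2 * (norm e * (Kp * (\<epsilon> * norm e))) = c * (norm e)^2"
      unfolding c_def \<epsilon>_def using Kp by (simp add: power2_eq_square field_simps)
    finally show ?thesis unfolding e_def .
  qed
  show ?thesis
    unfolding unstable_def
  proof
    assume st: "lyap_stable f xe"
    obtain \<delta> where \<delta>: "\<delta> > 0"
      "\<And>x T. ode_sol_on f x T \<Longrightarrow> dist (x 0) xe < \<delta> \<Longrightarrow> \<forall>t\<in>{0..<T}. dist (x t) xe < r / 2"
      using st r unfolding lyap_stable_def by (metis half_gt_zero)
    have vne: "v \<noteq> 0" using vpos by auto
    define s where "s = min \<delta> (r / 2) / (2 * norm v)"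
    have s: "s > 0" unfolding s_def using \<delta> r vne by simp
    define z0 where "z0 = xe + s *\<^sub>R v"
    have z0n: "norm (z0 - xe) < min \<delta> (r / 2)"
    proof -
      have "norm (z0 - xe) = min \<delta> (r / 2) / 2" unfolding z0_def s_def using vne \<delta> r by simp
      also have "\<dots> < min \<delta> (r / 2)"
      proof -
        have "min \<delta> (r / 2) > 0" using \<delta> r by simp
        then show ?thesis by linarith
      qed
      finally show ?thesis .
    qed
    have Vz0: "V z0 > 0" unfolding V_def z0_def using s vpos
      by (simp add: matrix_vector_mult_scaleR)
    obtain L where L: "L > 0" "\<forall>a\<in>cball xe r. \<forall>b\<in>cball xe r. norm (f a - f b) \<le> L * norm (a - b)"
      using lip[of r] by blast
    define F where "F z = f (closest_point (cball xe r) z)" for z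
    have FL: "\<And>a b. norm (F a - F b) \<le> L * norm (a - b)"
      using lip_extend[OF L(2) L(1)] r unfolding F_def by auto
    obtain y where y: "ode_sol_global F y" "y 0 = z0" using picard_global[OF FL L(1)] by blast
    have Ff: "F z = f z" if "norm (z - xe) \<le> r" for z
      unfolding F_def using that by (subst closest_point_self) (auto simp: dist_norm norm_minus_commute)
    have yd: "(y has_vector_derivative F (y t)) (at t within {0..})" if "t \<ge> 0" for t
      using y(1) that unfolding ode_sol_global_def by auto
    have conty: "continuous_on {0..} y" by (rule continuous_on_vector_derivative) (use yd in auto)
    have stay: "norm (y t - xe) < r / 2" if t1: "t \<ge> 0" for t
    proof (rule ccontr)
      assume "\<not> norm (y t - xe) < r / 2"
      then have t1b: "r / 2 \<le> norm (y t - xe)" by simp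
      define B where "B = {u. 0 \<le> u \<and> r / 2 \<le> norm (y u - xe)}"
      define \<tau> where "\<tau> = Inf B"
      have Bne: "B \<noteq> {}" using t1 t1b unfolding B_def by blast
      have Bbdd: "bdd_below B" unfolding B_def by (rule bdd_belowI[of _ 0]) auto
      have tau0: "0 \<le> \<tau>" unfolding \<tau>_def by (rule cInf_greatest[OF Bne]) (auto simp: B_def)
      have before: "norm (y u - xe) < r / 2" if "0 \<le> u" "u < \<tau>" for u
      proof (rule ccontr)
        assume "\<not> norm (y u - xe) < r / 2"
        then have "u \<in> B" unfolding B_def using that by auto
        then have "\<tau> \<le> u" unfolding \<tau>_def by (rule cInf_lower[OF _ Bbdd])
        with that show False by simp
      qed
      have ctau: "norm (y \<tau> - xe) \<le> r / 2"
      proof (cases "\<tau> = 0")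
        case True then show ?thesis using y(2) z0n by simp
      next
        case False
        then have tpos: "0 < \<tau>" using tau0 by simp
        have cl: "closure {0..<\<tau>} = {0..\<tau>}" using tpos by simp
        have cc: "continuous_on (closure {0..<\<tau>}) (\<lambda>u. norm (y u - xe))"
          unfolding cl by (intro continuous_intros continuous_on_subset[OF conty]) auto
        have tc: "\<tau> \<in> closure {0..<\<tau>}" unfolding cl using tau0 by simp
        show ?thesis
          by (rule continuous_le_on_closure[OF cc tc]) (use before in \<open>auto intro: less_imp_le\<close>)
      qed
      have "continuous (at \<tau> within {0..}) (\<lambda>u. norm (y u - xe))"
        using conty tau0 by (intro continuous_intros) (auto simp: continuous_on_eq_continuous_within)
      then have "((\<lambda>u. norm (y u - xe)) \<longlongrightarrow> norm (y \<tau> - xe)) (at \<tau> within {0..})"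
        by (simp add: continuous_within)
      moreover have "norm (y \<tau> - xe) < r" using ctau r by simp
      ultimately have "\<forall>\<^sub>F u in at \<tau> within {0..}. norm (y u - xe) < r" by (rule order_tendstoD(2))
      then obtain \<eta> where \<eta>: "\<eta> > 0" "\<And>u. u \<in> {0..} \<Longrightarrow> u \<noteq> \<tau> \<Longrightarrow> dist u \<tau> < \<eta> \<Longrightarrow> norm (y u - xe) < r"
        unfolding eventually_at by blast
      have inr: "norm (y u - xe) < r" if "0 \<le> u" "u < \<tau> + \<eta>" for u
      proof (cases "u < \<tau>")
        case True then show ?thesis using before[OF that(1) True] r by simp
      next
        case False
        show ?thesis
        proof (cases "u = \<tau>")
          case True then show ?thesis using ctau r by simp
        next
          case False
          then show ?thesis using \<eta>(2)[of u] that \<open>\<not> u < \<tau>\<close> by (auto simp: dist_real_def)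
        qed
      qed
      have solf: "ode_sol_on f y (\<tau> + \<eta>)"
        unfolding ode_sol_on_def
      proof
        fix u assume u: "u \<in> {0..<\<tau> + \<eta>}"
        have "(y has_vector_derivative F (y u)) (at u within {0..<\<tau> + \<eta>})"
          by (rule has_vector_derivative_within_subset[OF yd]) (use u in auto)
        moreover have "F (y u) = f (y u)" using Ff inr u by (auto intro: less_imp_le)
        ultimately show "(y has_vector_derivative f (y u)) (at u within {0..<\<tau> + \<eta>})" by simp
      qed
      have small: "\<forall>u\<in>{0..<\<tau> + \<eta>}. dist (y u) xe < r / 2"
        by (rule \<delta>(2)[OF solf]) (use y(2) z0n in \<open>simp add: dist_norm\<close>)
      have "\<tau> + \<eta> \<le> Inf B"
      proof (rule cInf_greatest[OF Bne])
        fix b assume b: "b \<in> B"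
        show "\<tau> + \<eta> \<le> b"
        proof (rule ccontr)
          assume "\<not> \<tau> + \<eta> \<le> b"
          then have "dist (y b) xe < r / 2" using small b unfolding B_def by auto
          then show False using b unfolding B_def by (simp add: dist_norm)
        qed
      qed
      then show False using \<eta>(1) unfolding \<tau>_def by simp
    qed
    define g where "g t = V (y t)" for t
    define g' where "g' t = 2 * ((y t - xe) \<bullet> (P *v f (y t)))" for t
    have yfd: "(y has_vector_derivative f (y t)) (at t within {0..})" if "t \<ge> 0" for t
      using yd[OF that] Ff stay[OF that] r by simp
    have gd: "(g has_real_derivative g' t) (at t within {0..})" if "t \<in> {0..}" for t
      unfolding g_def g'_def V_def by (rule V_deriv[OF Psym yfd]) (use that in auto)
    have g'ge: "c * (norm (y t - xe))^2 \<le> g' t" if "t \<ge> 0" for t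
      unfolding g'_def by (rule inc) (use stay[OF that] r in simp)
    have gmono: "g 0 \<le> g t" if "t \<ge> 0" for t
    proof -
      have "0 * (t - 0) \<le> g t - g 0"
      proof (rule mvt_lower[where S="{0..}" and g'=g'])
        show "0 \<le> t" by (rule that)
        show "\<And>u. u \<in> {0..t} \<Longrightarrow> (g has_real_derivative g' u) (at u within {0..})" using gd by auto
        show "{0..t} \<subseteq> {0..}" by auto
        fix u assume u: "u \<in> {0..t}"
        have "0 \<le> c * (norm (y u - xe))^2" using c by simp
        also have "\<dots> \<le> g' u" using g'ge u by simp
        finally show "0 \<le> g' u" .
      qed
      then show ?thesis by simp
    qed
    have g0: "g 0 > 0" unfolding g_def using y(2) Vz0 by simp
    define \<kappa> where "\<kappa> = c * g 0 / Kp"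
    have \<kappa>: "\<kappa> > 0" unfolding \<kappa>_def using c g0 Kp by simp
    have grow: "g 0 + \<kappa> * t \<le> g t" if "t \<ge> 0" for t
    proof -
      have "\<kappa> * (t - 0) \<le> g t - g 0"
      proof (rule mvt_lower[where S="{0..}" and g'=g'])
        show "0 \<le> t" by (rule that)
        show "\<And>u. u \<in> {0..t} \<Longrightarrow> (g has_real_derivative g' u) (at u within {0..})" using gd by auto
        show "{0..t} \<subseteq> {0..}" by auto
        fix u assume u: "u \<in> {0..t}"
        have "g 0 \<le> g u" using gmono u by simp
        also have "g u \<le> Kp * (norm (y u - xe))^2" unfolding g_def V_def by (rule KpV)
        finally have "g 0 / Kp \<le> (norm (y u - xe))^2" using Kp by (simp add: divide_le_eq mult.commute)
        then have "c * (g 0 / Kp) \<le> c * (norm (y u - xe))^2" using c by (intro mult_left_mono) auto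
        also have "\<dots> \<le> g' u" using g'ge u by simp
        finally show "\<kappa> \<le> g' u" unfolding \<kappa>_def by simp
      qed
      then show ?thesis by simp
    qed
    define t where "t = Kp * r^2 / \<kappa>"
    have t: "t \<ge> 0" unfolding t_def using Kp \<kappa> by simp
    have "g t \<le> Kp * (norm (y t - xe))^2" unfolding g_def V_def by (rule KpV)
    also have "\<dots> \<le> Kp * r^2"
    proof -
      have "norm (y t - xe) \<le> r" using stay[OF t] r by simp
      then have "(norm (y t - xe))^2 \<le> r^2" by (simp add: power_mono)
      then show ?thesis using Kp by simp
    qed
    also have "\<dots> = \<kappa> * t" unfolding t_def using \<kappa> by simp
    also have "\<dots> < g 0 + \<kappa> * t" using g0 by simp
    also have "\<dots> \<le> g t" by (rule grow[OF t])
    finally show False by simp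
  qed
qed



definition mat3 :: "real \<Rightarrow> real \<Rightarrow> real \<Rightarrow> real \<Rightarrow> real \<Rightarrow> real \<Rightarrow> real \<Rightarrow> real \<Rightarrow> real \<Rightarrow> real^3^3" where
  "mat3 a b c d e f g h i = vector [vector [a,b,c], vector [d,e,f], vector [g,h,i]]"

lemma mat3_nth [simp]:
  "mat3 a b c d e f g h i $ 1 $ 1 = a" "mat3 a b c d e f g h i $ 1 $ 2 = b" "mat3 a b c d e f g h i $ 1 $ 3 = c"
  "mat3 a b c d e f g h i $ 2 $ 1 = d" "mat3 a b c d e f g h i $ 2 $ 2 = e" "mat3 a b c d e f g h i $ 2 $ 3 = f"
  "mat3 a b c d e f g h i $ 3 $ 1 = g" "mat3 a b c d e f g h i $ 3 $ 2 = h" "mat3 a b c d e f g h i $ 3 $ 3 = i"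
  by (simp_all add: mat3_def)

lemma mat3_eq_iff: "(M :: real^3^3) = N \<longleftrightarrow> (\<forall>i j. M $ i $ j = N $ i $ j)"
  by (simp add: vec_eq_iff)

lemma mat3_mult: "mat3 a1 b1 c1 d1 e1 f1 g1 h1 i1 ** mat3 a2 b2 c2 d2 e2 f2 g2 h2 i2 =
  mat3 (a1*a2 + b1*d2 + c1*g2) (a1*b2 + b1*e2 + c1*h2) (a1*c2 + b1*f2 + c1*i2)
       (d1*a2 + e1*d2 + f1*g2) (d1*b2 + e1*e2 + f1*h2) (d1*c2 + e1*f2 + f1*i2)
       (g1*a2 + h1*d2 + i1*g2) (g1*b2 + h1*e2 + i1*h2) (g1*c2 + h1*f2 + i1*i2)"
  by (simp add: mat3_eq_iff forall_3 matrix_matrix_mult_def sum_3)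

lemma mat3_transpose: "transpose (mat3 a b c d e f g h i) = mat3 a d g b e h c f i"
  by (simp add: mat3_eq_iff forall_3 transpose_def)

lemma mat3_add: "mat3 a1 b1 c1 d1 e1 f1 g1 h1 i1 + mat3 a2 b2 c2 d2 e2 f2 g2 h2 i2 =
  mat3 (a1+a2) (b1+b2) (c1+c2) (d1+d2) (e1+e2) (f1+f2) (g1+g2) (h1+h2) (i1+i2)"
  by (simp add: mat3_eq_iff forall_3)

lemma mat3_neg: "- mat3 a b c d e f g h i = mat3 (-a) (-b) (-c) (-d) (-e) (-f) (-g) (-h) (-i)"
  by (simp add: mat3_eq_iff forall_3)

lemma mat3_scaleR: "r *\<^sub>R mat3 a b c d e f g h i = mat3 (r*a) (r*b) (r*c) (r*d) (r*e) (r*f) (r*g) (r*h) (r*i)"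
  by (simp add: mat3_eq_iff forall_3)

lemma mat3_vec: "mat3 a b c d e f g h i *v v = vector [a * v$1 + b * v$2 + c * v$3, d * v$1 + e * v$2 + f * v$3, g * v$1 + h * v$2 + i * v$3]"
  by (simp add: vec_eq_iff forall_3 matrix_vector_mult_def sum_3)

lemma vec3_eq_iff: "(x :: real^3) = y \<longleftrightarrow> x$1 = y$1 \<and> x$2 = y$2 \<and> x$3 = y$3"
  by (simp add: vec_eq_iff forall_3)

lemma inner3: "(x :: real^3) \<bullet> y = x$1 * y$1 + x$2 * y$2 + x$3 * y$3"
  by (simp add: inner_vec_def sum_3)

definition comp3 :: "real \<Rightarrow> real \<Rightarrow> real \<Rightarrow> real^3^3" where
  "comp3 a0 a1 a2 = mat3 0 1 0 0 0 1 (-a0) (-a1) (-a2)"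

definition jac :: "real \<Rightarrow> real \<Rightarrow> real \<Rightarrow> real \<Rightarrow> real \<Rightarrow> real \<Rightarrow> real^3 \<Rightarrow> real^3^3" where
  "jac d1 d2 ys KP KI u0 z = mat3 (-d1) (-u0 - KI*z$3 - KP*ys + 2*KP*z$2) (-KI*z$2)
                                 (u0 + KI*z$3 + KP*ys - KP*z$2) (-d2 - KP*z$1) (KI*z$1)
                                 0 (-1) 0"

definition obs :: "real \<Rightarrow> real \<Rightarrow> real \<Rightarrow> real \<Rightarrow> real \<Rightarrow> real^3^3" where
  "obs d2 KP KI X w = mat3 0 0 1 0 (-1) 0 (-w) (d2 + KP*X) (-KI*X)"

lemma obs_similar:
  fixes dA dB ys KP KI uu :: real and z :: "real^3"
  assumes "z$2 = ys"
  defines "X \<equiv> z$1" and "w \<equiv> uu + KI * z$3"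
  shows "obs dB KP KI X w ** jac dA dB ys KP KI uu z =
    comp3 (KI * (dA * X - w * ys)) (dA * (dB + KP * X) - w * KP * ys + w^2 + KI * X) (dA + dB + KP * X) ** obs dB KP KI X w"
  unfolding obs_def jac_def comp3_def mat3_mult using assms
  by (simp add: mat3_eq_iff forall_3 power2_eq_square algebra_simps)

lemma matrix_add_rdistrib': "((B + C) ** A) = (B ** A) + (C ** (A::real^'n^'k))" for B C :: "real^'k^'m"
  by (simp add: matrix_matrix_mult_def vec_eq_iff sum.distrib distrib_right)

lemma transfer_lyap:
  fixes Ob A C Pc M :: "real^3^3"
  assumes "Ob ** A = C ** Ob" "transpose C ** Pc + Pc ** C = M"
  shows "transpose A ** (transpose Ob ** Pc ** Ob) + (transpose Ob ** Pc ** Ob) ** A = transpose Ob ** M ** Ob"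
proof -
  have "transpose A ** (transpose Ob ** Pc ** Ob) = transpose (Ob ** A) ** Pc ** Ob"
    by (simp add: matrix_mul_assoc matrix_transpose_mul)
  also have "\<dots> = transpose Ob ** (transpose C ** Pc) ** Ob"
    using assms(1) by (simp add: matrix_mul_assoc matrix_transpose_mul)
  finally have 1: "transpose A ** (transpose Ob ** Pc ** Ob) = transpose Ob ** (transpose C ** Pc) ** Ob" .
  have 2: "(transpose Ob ** Pc ** Ob) ** A = transpose Ob ** (Pc ** C) ** Ob"
    using assms(1) by (simp add: matrix_mul_assoc[symmetric])
  show ?thesis unfolding 1 2 assms(2)[symmetric]
    by (simp add: matrix_add_ldistrib matrix_add_rdistrib')
qed

lemma transfer_pd:
  fixes Ob M :: "real^3^3"
  assumes "pos_def M" "\<And>v. Ob *v v = 0 \<Longrightarrow> v = 0"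
  shows "pos_def (transpose Ob ** M ** Ob)"
  unfolding pos_def_def
proof (intro conjI allI impI)
  have "transpose M = M" using assms(1) unfolding pos_def_def by simp
  then show "transpose (transpose Ob ** M ** Ob) = transpose Ob ** M ** Ob"
    by (simp add: matrix_transpose_mul matrix_mul_assoc)
  fix v :: "real^3" assume v: "v \<noteq> 0"
  have "v \<bullet> ((transpose Ob ** M ** Ob) *v v) = v \<bullet> (transpose Ob *v (M *v (Ob *v v)))"
    by (simp add: matrix_vector_mul_assoc[symmetric])
  also have "\<dots> = (Ob *v v) \<bullet> (M *v (Ob *v v))" by (rule transpose_dot)
  finally show "v \<bullet> ((transpose Ob ** M ** Ob) *v v) > 0"
    using assms(1) assms(2)[of v] v unfolding pos_def_def by auto
qed

lemma transfer_quad: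
  fixes Ob M :: "real^3^3"
  shows "v \<bullet> ((transpose Ob ** M ** Ob) *v v) = (Ob *v v) \<bullet> (M *v (Ob *v v))"
proof -
  have "v \<bullet> ((transpose Ob ** M ** Ob) *v v) = v \<bullet> (transpose Ob *v (M *v (Ob *v v)))"
    by (simp add: matrix_vector_mul_assoc[symmetric])
  also have "\<dots> = (Ob *v v) \<bullet> (M *v (Ob *v v))" by (rule transpose_dot)
  finally show ?thesis .
qed

lemma transpose_add_scale: "transpose (P0 + e *\<^sub>R P1) = transpose P0 + e *\<^sub>R transpose (P1::real^3^3)"
  by (simp add: transpose_def vec_eq_iff)

lemma scaleR_mat_vec: "(e *\<^sub>R P) *v v = e *\<^sub>R (P *v v)" for P :: "real^'n^'m"
  by (simp add: vec_eq_iff matrix_vector_mult_def sum_distrib_left mult.assoc)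

lemma pos_def_perturb:
  fixes P0 P1 :: "real^3^3"
  assumes "pos_def P0" "transpose P1 = P1"
  shows "\<exists>e>0. pos_def (P0 + e *\<^sub>R P1)"
proof -
  obtain l where l: "l > 0" "\<And>v. l * (norm v)^2 \<le> v \<bullet> (P0 *v v)" using pd_lower[OF assms(1)] by blast
  obtain K where K: "K > 0" "\<And>v. \<bar>v \<bullet> (P1 *v v)\<bar> \<le> K * (norm v)^2" using mat_bound[of P1] by blast
  define e where "e = l / (2 * K)"
  have e: "e > 0" unfolding e_def using l K by simp
  have "pos_def (P0 + e *\<^sub>R P1)"
    unfolding pos_def_def
  proof (intro conjI allI impI)
    show "transpose (P0 + e *\<^sub>R P1) = P0 + e *\<^sub>R P1"
      using assms unfolding pos_def_def transpose_add_scale by simp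
    fix v :: "real^3" assume v: "v \<noteq> 0"
    have "v \<bullet> ((P0 + e *\<^sub>R P1) *v v) = v \<bullet> (P0 *v v) + e * (v \<bullet> (P1 *v v))"
      by (simp add: matrix_vector_mult_add_rdistrib inner_add_right scaleR_mat_vec)
    moreover have "e * (v \<bullet> (P1 *v v)) \<ge> - (e * (K * (norm v)^2))"
    proof -
      have "e * \<bar>v \<bullet> (P1 *v v)\<bar> \<le> e * (K * (norm v)^2)" using K(2)[of v] e by (intro mult_left_mono) auto
      moreover have "- (e * \<bar>v \<bullet> (P1 *v v)\<bar>) \<le> e * (v \<bullet> (P1 *v v))" using e
        by (simp add: abs_if)
      ultimately show ?thesis by linarith
    qed
    moreover have "e * (K * (norm v)^2) = l / 2 * (norm v)^2" unfolding e_def using K by simp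
    moreover have "l * (norm v)^2 > 0" using l v by simp
    ultimately show "v \<bullet> ((P0 + e *\<^sub>R P1) *v v) > 0" using l(2)[of v] by linarith
  qed
  with e show ?thesis by blast
qed



lemma hurwitz_comp:
  fixes a0 a1 a2 :: real
  assumes a0: "a0 > 0" and a2: "a2 > 0" and D: "a1 * a2 > a0"
  shows "\<exists>Pc Qc. pos_def Pc \<and> pos_def Qc \<and> transpose (comp3 a0 a1 a2) ** Pc + Pc ** comp3 a0 a1 a2 = - Qc"
proof -
  define D where "D = a1 * a2 - a0"
  have Dp: "D > 0" unfolding D_def using D by simp
  have a1: "a1 > 0" using D a0 a2 by (smt (verit) mult_nonpos_nonneg)
  define P0 where "P0 = mat3 (a0^2) (a0*a1) 0 (a0*a1) (a0*a2 + a1^2) a0 0 a0 a1"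
  define P1 where "P1 = mat3 (a1*D + a0*a2^2 + a0*a2) (a2*D + a0*a2 + a0) D
                             (a2*D + a0*a2 + a0) (a2^3 - D + a1*a2 + a2^2 + a1) (a2^2 + a2)
                             D (a2^2 + a2) (a2 + 1)"
  have P0pd: "pos_def P0"
    unfolding pos_def_def
  proof (intro conjI allI impI)
    show "transpose P0 = P0" unfolding P0_def mat3_transpose ..
    fix v :: "real^3" assume v: "v \<noteq> 0"
    have eq: "a2 * (v \<bullet> (P0 *v v)) = a2 * (a0 * v$1 + a1 * v$2)^2 + a0 * (a2 * v$2 + v$3)^2 + D * (v$3)^2"
      unfolding P0_def mat3_vec inner3 D_def by (simp add: power2_eq_square algebra_simps)
    have "a2 * (v \<bullet> (P0 *v v)) > 0"
    proof (cases "v$3 = 0")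
      case False
      then have "D * (v$3)^2 > 0" using Dp by simp
      moreover have "a2 * (a0 * v$1 + a1 * v$2)^2 \<ge> 0" "a0 * (a2 * v$2 + v$3)^2 \<ge> 0" using a0 a2 by simp_all
      ultimately show ?thesis using eq by linarith
    next
      case v3: True
      show ?thesis
      proof (cases "v$2 = 0")
        case False
        then have "a0 * (a2 * v$2 + v$3)^2 > 0" using v3 a0 a2 by simp
        moreover have "a2 * (a0 * v$1 + a1 * v$2)^2 \<ge> 0" using a2 by simp
        ultimately show ?thesis using eq v3 by simp
      next
        case v2: True
        then have "v$1 \<noteq> 0" using v v3 by (simp add: vec3_eq_iff)
        then have "a2 * (a0 * v$1 + a1 * v$2)^2 > 0" using v2 a0 a2 by simp
        moreover have "a0 * (a2 * v$2 + v$3)^2 = 0" "D * (v$3)^2 = 0" using v2 v3 by simp_all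
        ultimately show ?thesis using eq by linarith
      qed
    qed
    then show "v \<bullet> (P0 *v v) > 0" using a2 by (simp add: zero_less_mult_iff)
  qed
  have P1s: "transpose P1 = P1" unfolding P1_def mat3_transpose ..
  obtain e where e: "e > 0" "pos_def (P0 + e *\<^sub>R P1)" using pos_def_perturb[OF P0pd P1s] by blast
  define Qc where "Qc = mat3 (2*a0*D*e) 0 0 0 (2*D*e) 0 0 0 (2*D)"
  have Qpd: "pos_def Qc"
    unfolding pos_def_def
  proof (intro conjI allI impI)
    show "transpose Qc = Qc" unfolding Qc_def mat3_transpose ..
    fix v :: "real^3" assume v: "v \<noteq> 0"
    have eq: "v \<bullet> (Qc *v v) = 2*a0*D*e * (v$1)^2 + 2*D*e * (v$2)^2 + 2*D * (v$3)^2"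
      unfolding Qc_def mat3_vec inner3 by (simp add: power2_eq_square algebra_simps)
    have p1: "2*a0*D*e > 0" "2*D*e > 0" "2*D > 0" using a0 Dp e by simp_all
    have "(v$1)^2 > 0 \<or> (v$2)^2 > 0 \<or> (v$3)^2 > 0" using v by (auto simp: vec3_eq_iff)
    then have "0 < 2*a0*D*e * (v$1)^2 \<or> 0 < 2*D*e * (v$2)^2 \<or> 0 < 2*D * (v$3)^2"
      using mult_pos_pos[OF p1(1), of "(v$1)^2"] mult_pos_pos[OF p1(2), of "(v$2)^2"] mult_pos_pos[OF p1(3), of "(v$3)^2"]
      by blast
    moreover have "0 \<le> 2*a0*D*e * (v$1)^2" "0 \<le> 2*D*e * (v$2)^2" "0 \<le> 2*D * (v$3)^2"
      using p1 by (auto intro: mult_nonneg_nonneg less_imp_le)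
    ultimately show "v \<bullet> (Qc *v v) > 0" unfolding eq by linarith
  qed
  have "transpose (comp3 a0 a1 a2) ** (P0 + e *\<^sub>R P1) + (P0 + e *\<^sub>R P1) ** comp3 a0 a1 a2 = - Qc"
    unfolding comp3_def P0_def P1_def Qc_def D_def mat3_scaleR mat3_add mat3_transpose mat3_mult mat3_neg
    by (simp add: mat3_eq_iff forall_3 power2_eq_square power3_eq_cube algebra_simps)
  then show ?thesis using e(2) Qpd by blast
qed

lemma cubic_pos_root:
  fixes a0 a1 a2 :: real
  assumes a0: "a0 < 0"
  shows "\<exists>lam>0. lam^3 + a2 * lam^2 + a1 * lam + a0 = 0"
proof -
  define p where "p x = x^3 + a2 * x^2 + a1 * x + a0" for x :: real
  define M where "M = 1 + \<bar>a0\<bar> + \<bar>a1\<bar> + \<bar>a2\<bar>"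
  have M1: "M \<ge> 1" unfolding M_def by simp
  have MM: "M^2 \<ge> M" using M1 by (simp add: power2_eq_square)
  have pM: "p M \<ge> 0"
  proof -
    have f1: "M^3 = M^2 + \<bar>a0\<bar> * M^2 + \<bar>a1\<bar> * M^2 + \<bar>a2\<bar> * M^2"
      by (simp add: M_def power2_eq_square power3_eq_cube algebra_simps)
    have f3: "\<bar>a0\<bar> * M^2 \<ge> \<bar>a0\<bar>" using MM M1 by (simp add: mult_left_mono[of 1 "M^2" "\<bar>a0\<bar>", simplified])
    have f4: "\<bar>a1\<bar> * M^2 \<ge> \<bar>a1\<bar> * M" using MM by (simp add: mult_left_mono)
    have f5: "a2 * M^2 \<ge> - (\<bar>a2\<bar> * M^2)" "a1 * M \<ge> - (\<bar>a1\<bar> * M)" "a0 \<ge> - \<bar>a0\<bar>"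
      using M1 by (auto simp: abs_if)
    have "M^2 \<ge> 0" by simp
    then show ?thesis unfolding p_def using f1 f3 f4 f5 by linarith
  qed
  have "continuous_on {0..M} p" unfolding p_def by (intro continuous_intros)
  from IVT'[of p 0 0 M, OF _ pM _ this] a0 M1
  obtain x where x: "0 \<le> x" "x \<le> M" "p x = 0" unfolding p_def by auto
  have "x \<noteq> 0" using x(3) a0 unfolding p_def by auto
  then have "x > 0" using x(1) by simp
  then show ?thesis using x(3) unfolding p_def by blast
qed

lemma unstab_comp:
  fixes a0 a1 a2 :: real
  assumes a0: "a0 < 0" and a2: "a2 > 0"
  shows "\<exists>P Q v. transpose P = P \<and> pos_def Q \<and> transpose (comp3 a0 a1 a2) ** P + P ** comp3 a0 a1 a2 = Q
           \<and> v \<bullet> (P *v v) > 0"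
proof -
  define D where "D = a1 * a2 - a0"
  obtain p33 where p33: "2 * p33 * D + 2 * a2 - 2 * a1 > 0"
  proof (cases "D = 0")
    case True
    then have "a1 * a2 < 0" using a0 unfolding D_def by simp
    then have "a1 < 0" using a2 by (simp add: mult_less_0_iff)
    then show ?thesis using that[of 0] True a2 by simp
  next
    case False
    have "2 * ((\<bar>a1\<bar> + 1) / D) * D + 2 * a2 - 2 * a1 = 2 * \<bar>a1\<bar> + 2 + 2 * a2 - 2 * a1"
      using False by simp
    also have "\<dots> > 0" using a2 by (simp add: abs_if)
    finally show ?thesis by (rule that)
  qed
  define q2 where "q2 = 2 * p33 * D + 2 * a2 - 2 * a1"
  define P where "P = mat3 (a1 - a0 * (a2 * p33 - 1)) (a2 - a0 * p33) 1
                          (a2 - a0 * p33) (- (a2 * (a2 * p33 - 1) + 1 + a1 * p33)) (- (a2 * p33 - 1))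
                          1 (- (a2 * p33 - 1)) (- p33)"
  define Q where "Q = mat3 (- 2 * a0) 0 0 0 q2 0 0 0 2"
  have Ps: "transpose P = P" unfolding P_def mat3_transpose ..
  have Qpd: "pos_def Q"
    unfolding pos_def_def
  proof (intro conjI allI impI)
    show "transpose Q = Q" unfolding Q_def mat3_transpose ..
    fix v :: "real^3" assume v: "v \<noteq> 0"
    have eq: "v \<bullet> (Q *v v) = (- 2 * a0) * (v$1)^2 + q2 * (v$2)^2 + 2 * (v$3)^2"
      unfolding Q_def mat3_vec inner3 by (simp add: power2_eq_square algebra_simps)
    have p1: "- 2 * a0 > 0" "q2 > 0" "(2::real) > 0" using a0 p33 unfolding q2_def by simp_all
    have "(v$1)^2 > 0 \<or> (v$2)^2 > 0 \<or> (v$3)^2 > 0" using v by (auto simp: vec3_eq_iff)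
    then have "0 < (- 2 * a0) * (v$1)^2 \<or> 0 < q2 * (v$2)^2 \<or> 0 < 2 * (v$3)^2"
      using mult_pos_pos[OF p1(1), of "(v$1)^2"] mult_pos_pos[OF p1(2), of "(v$2)^2"] mult_pos_pos[OF p1(3), of "(v$3)^2"]
      by blast
    moreover have "0 \<le> (- 2 * a0) * (v$1)^2" by (rule mult_nonneg_nonneg) (use p1 in auto)
    moreover have "0 \<le> q2 * (v$2)^2" by (rule mult_nonneg_nonneg) (use p1 in auto)
    moreover have "0 \<le> 2 * (v$3)^2" by simp
    ultimately show "v \<bullet> (Q *v v) > 0" unfolding eq by linarith
  qed
  have lyap: "transpose (comp3 a0 a1 a2) ** P + P ** comp3 a0 a1 a2 = Q"
    unfolding comp3_def P_def Q_def q2_def D_def mat3_scaleR mat3_add mat3_transpose mat3_mult mat3_neg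
    by (simp add: mat3_eq_iff forall_3 power2_eq_square power3_eq_cube algebra_simps)
  obtain lam where lam: "lam > 0" "lam^3 + a2 * lam^2 + a1 * lam + a0 = 0" using cubic_pos_root[OF a0] by blast
  define v :: "real^3" where "v = vector [1, lam, lam^2]"
  have Cv: "comp3 a0 a1 a2 *v v = lam *\<^sub>R v"
  proof -
    have "lam^3 = - a0 - a1 * lam - a2 * lam^2" using lam(2) by simp
    then show ?thesis unfolding comp3_def v_def mat3_vec
      by (simp add: vec3_eq_iff power2_eq_square power3_eq_cube)
  qed
  have "2 * (v \<bullet> (P *v (comp3 a0 a1 a2 *v v))) = v \<bullet> (Q *v v)" by (rule quad_lyap[OF Ps lyap])
  then have "2 * lam * (v \<bullet> (P *v v)) = v \<bullet> (Q *v v)"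
    unfolding Cv by (simp add: matrix_vector_mult_scaleR)
  moreover have "v \<bullet> (Q *v v) > 0" using Qpd unfolding pos_def_def v_def by (auto simp: vec3_eq_iff)
  ultimately have "0 < (2 * lam) * (v \<bullet> (P *v v))" by simp
  then have "v \<bullet> (P *v v) > 0" by (rule zero_less_mult_pos) (use lam(1) in simp)
  then show ?thesis using Ps Qpd lyap by blast
qed



lemma boost_resid:
  fixes y z :: "real^3"
  shows "boost_f d1 d2 ys KP KI u0 y - boost_f d1 d2 ys KP KI u0 z - jac d1 d2 ys KP KI u0 z *v (y - z) =
    vector [KP * (y$2 - z$2)^2 - KI * (y$2 - z$2) * (y$3 - z$3), KI * (y$1 - z$1) * (y$3 - z$3) - KP * (y$1 - z$1) * (y$2 - z$2), 0]"
  unfolding boost_f_def jac_def mat3_vec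
  by (simp add: vec3_eq_iff power2_eq_square algebra_simps)

lemma prod_le_norm2: "\<bar>(h::real^3)$i\<bar> * \<bar>h$j\<bar> \<le> (norm h)^2"
  using mult_mono[OF component_le_norm_cart[of h i] component_le_norm_cart[of h j]]
  by (simp add: power2_eq_square)

lemma resid_bound:
  fixes h :: "real^3"
  shows "norm (vector [KP * (h$2)^2 - KI * (h$2) * (h$3), KI * (h$1) * (h$3) - KP * (h$1) * (h$2), 0] :: real^3)
         \<le> 2 * (\<bar>KP\<bar> + \<bar>KI\<bar>) * (norm h)^2"
proof -
  let ?v = "vector [KP * (h$2)^2 - KI * (h$2) * (h$3), KI * (h$1) * (h$3) - KP * (h$1) * (h$2), 0] :: real^3"
  have "norm ?v \<le> \<bar>?v$1\<bar> + \<bar>?v$2\<bar> + \<bar>?v$3\<bar>"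
    using norm_le_l1_cart[of ?v] by (simp add: sum_3)
  also have "\<bar>?v$1\<bar> \<le> \<bar>KP\<bar> * (norm h)^2 + \<bar>KI\<bar> * (norm h)^2"
  proof -
    have "\<bar>?v$1\<bar> = \<bar>KP * (h$2 * h$2) - KI * h$2 * h$3\<bar>" by (simp add: power2_eq_square)
    also have "\<dots> \<le> \<bar>KP * (h$2 * h$2)\<bar> + \<bar>KI * h$2 * h$3\<bar>" by (rule abs_triangle_ineq4)
    also have "\<dots> = \<bar>KP\<bar> * (\<bar>h$2\<bar> * \<bar>h$2\<bar>) + \<bar>KI\<bar> * (\<bar>h$2\<bar> * \<bar>h$3\<bar>)"
      by (simp add: abs_mult mult.assoc)
    also have "\<dots> \<le> \<bar>KP\<bar> * (norm h)^2 + \<bar>KI\<bar> * (norm h)^2"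
      by (intro add_mono mult_left_mono prod_le_norm2) auto
    finally show ?thesis .
  qed
  also have "\<bar>?v$2\<bar> \<le> \<bar>KI\<bar> * (norm h)^2 + \<bar>KP\<bar> * (norm h)^2"
  proof -
    have "\<bar>?v$2\<bar> = \<bar>KI * h$1 * h$3 - KP * h$1 * h$2\<bar>" by simp
    also have "\<dots> \<le> \<bar>KI * h$1 * h$3\<bar> + \<bar>KP * h$1 * h$2\<bar>" by (rule abs_triangle_ineq4)
    also have "\<dots> = \<bar>KI\<bar> * (\<bar>h$1\<bar> * \<bar>h$3\<bar>) + \<bar>KP\<bar> * (\<bar>h$1\<bar> * \<bar>h$2\<bar>)"
      by (simp add: abs_mult mult.assoc)
    also have "\<dots> \<le> \<bar>KI\<bar> * (norm h)^2 + \<bar>KP\<bar> * (norm h)^2"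
      by (intro add_mono mult_left_mono prod_le_norm2) auto
    finally show ?thesis .
  qed
  finally show ?thesis by (simp add: algebra_simps)
qed

lemma boost_deriv:
  "(boost_f d1 d2 ys KP KI u0 has_derivative (\<lambda>h. jac d1 d2 ys KP KI u0 z *v h)) (at z)"
  unfolding has_derivative_at_alt
proof (intro conjI allI impI)
  show "bounded_linear ((*v) (jac d1 d2 ys KP KI u0 z))" by simp
  fix e :: real assume e: "e > 0"
  define K where "K = 2 * (\<bar>KP\<bar> + \<bar>KI\<bar>)"
  have K: "K \<ge> 0" unfolding K_def by simp
  show "\<exists>d>0. \<forall>y. norm (y - z) < d \<longrightarrow>
      norm (boost_f d1 d2 ys KP KI u0 y - boost_f d1 d2 ys KP KI u0 z - jac d1 d2 ys KP KI u0 z *v (y - z)) \<le> e * norm (y - z)"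
  proof (intro exI conjI allI impI)
    show "e / (K + 1) > 0" using e K by simp
    fix y assume y: "norm (y - z) < e / (K + 1)"
    have "norm (boost_f d1 d2 ys KP KI u0 y - boost_f d1 d2 ys KP KI u0 z - jac d1 d2 ys KP KI u0 z *v (y - z))
        \<le> K * (norm (y - z))^2"
      unfolding boost_resid K_def using resid_bound[of KP "y - z" KI] by simp
    also have "\<dots> = (K * norm (y - z)) * norm (y - z)" by (simp add: power2_eq_square)
    also have "\<dots> \<le> e * norm (y - z)"
    proof (rule mult_right_mono)
      have "K * norm (y - z) \<le> (K + 1) * norm (y - z)" by (simp add: algebra_simps)
      also have "\<dots> \<le> (K + 1) * (e / (K + 1))" using y K by (intro mult_left_mono) auto
      also have "\<dots> = e" using K by simp
      finally show "K * norm (y - z) \<le> e" .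
    qed simp
    finally show "norm (boost_f d1 d2 ys KP KI u0 y - boost_f d1 d2 ys KP KI u0 z - jac d1 d2 ys KP KI u0 z *v (y - z)) \<le> e * norm (y - z)" .
  qed
qed

lemma mat_vec_l1:
  fixes M :: "real^3^3"
  assumes "\<And>i j. \<bar>M $ i $ j\<bar> \<le> C"
  shows "norm (M *v h) \<le> 9 * C * norm h"
proof -
  have row: "\<bar>(M *v h) $ i\<bar> \<le> 3 * C * norm h" for i
  proof -
    have "\<bar>(M *v h) $ i\<bar> = \<bar>M$i$1 * h$1 + M$i$2 * h$2 + M$i$3 * h$3\<bar>"
      by (simp add: matrix_vector_mult_def sum_3)
    also have "\<dots> \<le> \<bar>M$i$1\<bar> * \<bar>h$1\<bar> + \<bar>M$i$2\<bar> * \<bar>h$2\<bar> + \<bar>M$i$3\<bar> * \<bar>h$3\<bar>"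
    proof -
      have "\<bar>M$i$1 * h$1 + M$i$2 * h$2 + M$i$3 * h$3\<bar> \<le> \<bar>M$i$1 * h$1 + M$i$2 * h$2\<bar> + \<bar>M$i$3 * h$3\<bar>"
        by (rule abs_triangle_ineq)
      also have "\<dots> \<le> \<bar>M$i$1 * h$1\<bar> + \<bar>M$i$2 * h$2\<bar> + \<bar>M$i$3 * h$3\<bar>"
        using abs_triangle_ineq[of "M$i$1 * h$1" "M$i$2 * h$2"] by linarith
      finally show ?thesis by (simp add: abs_mult)
    qed
    also have "\<dots> \<le> C * norm h + C * norm h + C * norm h"
      by (intro add_mono mult_mono assms component_le_norm_cart) (use assms[of i 1] in auto)
    finally show ?thesis by simp
  qed
  have "norm (M *v h) \<le> \<bar>(M *v h)$1\<bar> + \<bar>(M *v h)$2\<bar> + \<bar>(M *v h)$3\<bar>"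
    using norm_le_l1_cart[of "M *v h"] by (simp add: sum_3)
  also have "\<dots> \<le> 9 * C * norm h" using row[of 1] row[of 2] row[of 3] by simp
  finally show ?thesis .
qed

lemma jac_entry_bound:
  fixes b :: "real^3" and d1 d2 ys KP KI u0 B :: real
  assumes bB: "norm b \<le> B"
  defines "C \<equiv> 1 + \<bar>d1\<bar> + \<bar>d2\<bar> + \<bar>u0\<bar> + \<bar>KP\<bar> * \<bar>ys\<bar> + (\<bar>KI\<bar> + 2 * \<bar>KP\<bar>) * B"
  shows "\<bar>jac d1 d2 ys KP KI u0 b $ i $ j\<bar> \<le> C"
proof -
  have bk: "\<bar>b$k\<bar> \<le> B" for k using component_le_norm_cart[of b k] bB by linarith
  have B0: "B \<ge> 0" using bB norm_ge_zero[of b] by linarith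
  have ki: "\<bar>KI * b$k\<bar> \<le> \<bar>KI\<bar> * B" for k unfolding abs_mult by (intro mult_left_mono bk) auto
  have kp: "\<bar>KP * b$k\<bar> \<le> \<bar>KP\<bar> * B" for k unfolding abs_mult by (intro mult_left_mono bk) auto
  have ky: "\<bar>KP * ys\<bar> = \<bar>KP\<bar> * \<bar>ys\<bar>" by (simp add: abs_mult)
  have pos: "0 \<le> \<bar>KI\<bar> * B" "0 \<le> \<bar>KP\<bar> * B" "0 \<le> \<bar>KP\<bar> * \<bar>ys\<bar>" using B0 by simp_all
  have dist: "(\<bar>KI\<bar> + 2 * \<bar>KP\<bar>) * B = \<bar>KI\<bar> * B + 2 * (\<bar>KP\<bar> * B)" by (simp add: algebra_simps)
  have C1: "1 \<le> C" unfolding C_def using pos dist by simp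
  have e: "jac d1 d2 ys KP KI u0 b $ 1 $ 1 = - d1"
    "jac d1 d2 ys KP KI u0 b $ 1 $ 2 = - u0 - KI * b$3 - KP * ys + 2 * (KP * b$2)"
    "jac d1 d2 ys KP KI u0 b $ 1 $ 3 = - (KI * b$2)"
    "jac d1 d2 ys KP KI u0 b $ 2 $ 1 = u0 + KI * b$3 + KP * ys - KP * b$2"
    "jac d1 d2 ys KP KI u0 b $ 2 $ 2 = - d2 - KP * b$1"
    "jac d1 d2 ys KP KI u0 b $ 2 $ 3 = KI * b$1"
    "jac d1 d2 ys KP KI u0 b $ 3 $ 1 = 0"
    "jac d1 d2 ys KP KI u0 b $ 3 $ 2 = -1"
    "jac d1 d2 ys KP KI u0 b $ 3 $ 3 = 0"
    unfolding jac_def by simp_all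
  note F = ki[of 1, unfolded abs_le_iff] ki[of 2, unfolded abs_le_iff] ki[of 3, unfolded abs_le_iff]
    kp[of 1, unfolded abs_le_iff] kp[of 2, unfolded abs_le_iff] kp[of 3, unfolded abs_le_iff]
    abs_le_iff[of "KP * ys" "\<bar>KP\<bar> * \<bar>ys\<bar>", unfolded ky, simplified] pos dist C1
  have E11: "\<bar>jac d1 d2 ys KP KI u0 b $ 1 $ 1\<bar> \<le> C" unfolding e abs_le_iff using F unfolding C_def by linarith
  have E12: "\<bar>jac d1 d2 ys KP KI u0 b $ 1 $ 2\<bar> \<le> C" unfolding e abs_le_iff using F unfolding C_def by linarith
  have E13: "\<bar>jac d1 d2 ys KP KI u0 b $ 1 $ 3\<bar> \<le> C" unfolding e abs_le_iff using F unfolding C_def by linarith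
  have E21: "\<bar>jac d1 d2 ys KP KI u0 b $ 2 $ 1\<bar> \<le> C" unfolding e abs_le_iff using F unfolding C_def by linarith
  have E22: "\<bar>jac d1 d2 ys KP KI u0 b $ 2 $ 2\<bar> \<le> C" unfolding e abs_le_iff using F unfolding C_def by linarith
  have E23: "\<bar>jac d1 d2 ys KP KI u0 b $ 2 $ 3\<bar> \<le> C" unfolding e abs_le_iff using F unfolding C_def by linarith
  have E3: "\<bar>jac d1 d2 ys KP KI u0 b $ 3 $ 1\<bar> \<le> C" "\<bar>jac d1 d2 ys KP KI u0 b $ 3 $ 2\<bar> \<le> C"
    "\<bar>jac d1 d2 ys KP KI u0 b $ 3 $ 3\<bar> \<le> C" unfolding e using C1 by simp_all
  show ?thesis
    using exhaust_3[of i] exhaust_3[of j] by (elim disjE) (use E11 E12 E13 E21 E22 E23 E3 in simp_all)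
qed

lemma boost_lip:
  "\<exists>L>0. \<forall>a\<in>cball c R. \<forall>b\<in>cball c R.
     norm (boost_f d1 d2 ys KP KI u0 a - boost_f d1 d2 ys KP KI u0 b) \<le> L * norm (a - b)"
proof -
  define B where "B = norm c + \<bar>R\<bar>"
  define C where "C = 1 + \<bar>d1\<bar> + \<bar>d2\<bar> + \<bar>u0\<bar> + \<bar>KP\<bar> * \<bar>ys\<bar> + (\<bar>KI\<bar> + 2 * \<bar>KP\<bar>) * B"
  define K where "K = 2 * (\<bar>KP\<bar> + \<bar>KI\<bar>)"
  have B0: "B \<ge> 0" unfolding B_def by simp
  have C1: "C \<ge> 1" unfolding C_def using B0 by (simp add: add_nonneg_nonneg)
  have K0: "K \<ge> 0" unfolding K_def by simp
  define L where "L = 9 * C + K * (2 * \<bar>R\<bar>)"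
  have L0: "L > 0" unfolding L_def using C1 K0 by (simp add: add_pos_nonneg)
  have "\<forall>a\<in>cball c R. \<forall>b\<in>cball c R.
     norm (boost_f d1 d2 ys KP KI u0 a - boost_f d1 d2 ys KP KI u0 b) \<le> L * norm (a - b)"
  proof (intro ballI)
    fix a b assume a: "a \<in> cball c R" and b: "b \<in> cball c R"
    have na: "norm (a - c) \<le> \<bar>R\<bar>" "norm (b - c) \<le> \<bar>R\<bar>" using a b by (auto simp: dist_norm norm_minus_commute)
    have nb: "norm b \<le> B"
      using norm_triangle_ineq[of c "b - c"] na(2) unfolding B_def by simp
    have hb: "norm (a - b) \<le> 2 * \<bar>R\<bar>"
      using norm_triangle_ineq[of "a - c" "c - b"] na by (simp add: norm_minus_commute)
    define h where "h = a - b"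
    define v :: "real^3" where "v = vector [KP * (h$2)^2 - KI * (h$2) * (h$3), KI * (h$1) * (h$3) - KP * (h$1) * (h$2), 0]"
    have eq: "boost_f d1 d2 ys KP KI u0 a - boost_f d1 d2 ys KP KI u0 b = jac d1 d2 ys KP KI u0 b *v h + v"
      using boost_resid[of d1 d2 ys KP KI u0 a b] unfolding h_def v_def by (simp add: algebra_simps)
    have "norm (jac d1 d2 ys KP KI u0 b *v h) \<le> 9 * C * norm h"
      by (rule mat_vec_l1) (unfold C_def, rule jac_entry_bound[OF nb])
    moreover have "norm v \<le> K * (norm h)^2" unfolding v_def K_def by (rule resid_bound)
    moreover have "K * (norm h)^2 \<le> K * (2 * \<bar>R\<bar>) * norm h"
    proof -
      have "norm h * norm h \<le> (2 * \<bar>R\<bar>) * norm h" using hb unfolding h_def by (intro mult_right_mono) auto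
      then have "K * (norm h * norm h) \<le> K * ((2 * \<bar>R\<bar>) * norm h)" using K0 by (intro mult_left_mono)
      then show ?thesis by (simp add: power2_eq_square mult.assoc)
    qed
    ultimately have "norm (jac d1 d2 ys KP KI u0 b *v h + v) \<le> 9 * C * norm h + K * (2 * \<bar>R\<bar>) * norm h"
      using norm_triangle_ineq[of "jac d1 d2 ys KP KI u0 b *v h" v] by linarith
    then show "norm (boost_f d1 d2 ys KP KI u0 a - boost_f d1 d2 ys KP KI u0 b) \<le> L * norm (a - b)"
      unfolding eq L_def h_def by (simp add: algebra_simps)
  qed
  with L0 show ?thesis by blast
qed



lemma boost_zero:
  "boost_f d1 d2 ys KP KI u0 z = 0 \<longleftrightarrow>
    z$2 = ys \<and> ys * (u0 + KI * z$3) = 1 - d1 * z$1 \<and> z$1 * (u0 + KI * z$3) = d2 * ys"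
proof
  assume h: "boost_f d1 d2 ys KP KI u0 z = 0"
  have "boost_f d1 d2 ys KP KI u0 z $ 1 = 0" "boost_f d1 d2 ys KP KI u0 z $ 2 = 0" "boost_f d1 d2 ys KP KI u0 z $ 3 = 0"
    using h by simp_all
  then have c1: "- d1 * z$1 + 1 - u0 * z$2 - KI * z$2 * z$3 - KP * z$2 * ys + KP * (z$2)^2 = 0"
    and c2: "- d2 * z$2 + u0 * z$1 + KI * z$1 * z$3 + KP * z$1 * ys - KP * z$1 * z$2 = 0"
    and c3': "- z$2 + ys = 0"
    by (simp_all only: boost_f_def vector_3)
  have c3: "z$2 = ys" using c3' by linarith
  have e1: "ys * (u0 + KI * z$3) = 1 - d1 * z$1" using c1 unfolding c3 by (simp add: power2_eq_square algebra_simps)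
  have e2: "z$1 * (u0 + KI * z$3) = d2 * ys" using c2 unfolding c3 by (simp add: algebra_simps)
  show "z$2 = ys \<and> ys * (u0 + KI * z$3) = 1 - d1 * z$1 \<and> z$1 * (u0 + KI * z$3) = d2 * ys"
    using c3 e1 e2 by blast
next
  assume h: "z$2 = ys \<and> ys * (u0 + KI * z$3) = 1 - d1 * z$1 \<and> z$1 * (u0 + KI * z$3) = d2 * ys"
  then have c3: "z$2 = ys" and e1: "ys * (u0 + KI * z$3) = 1 - d1 * z$1" and e2: "z$1 * (u0 + KI * z$3) = d2 * ys"
    by auto
  have "- d1 * z$1 + 1 - u0 * z$2 - KI * z$2 * z$3 - KP * z$2 * ys + KP * (z$2)^2 = 0"
    using e1 unfolding c3 by (simp add: power2_eq_square algebra_simps)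
  moreover have "- d2 * z$2 + u0 * z$1 + KI * z$1 * z$3 + KP * z$1 * ys - KP * z$1 * z$2 = 0"
    using e2 unfolding c3 by (simp add: algebra_simps)
  moreover have "- z$2 + ys = 0" using c3 by simp
  ultimately show "boost_f d1 d2 ys KP KI u0 z = 0"
    unfolding boost_f_def vec3_eq_iff vector_3 by simp
qed

lemma equil_point:
  fixes X :: real
  assumes q: "d1 * X^2 - X + d2 * ys^2 = 0" and X: "X \<noteq> 0" and ys: "ys > 0" and KI: "KI > 0"
  shows "boost_f d1 d2 ys KP KI u0 (vector [X, ys, (1 - d1 * X - u0 * ys) / (KI * ys)]) = 0"
proof -
  have w: "u0 + KI * ((1 - d1 * X - u0 * ys) / (KI * ys)) = (1 - d1 * X) / ys"
    using ys KI by (simp add: field_simps)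
  have e1: "ys * ((1 - d1 * X) / ys) = 1 - d1 * X" using ys by simp
  have e2: "X * ((1 - d1 * X) / ys) = d2 * ys"
  proof -
    have "X * (1 - d1 * X) = d2 * ys * ys" using q by (simp add: power2_eq_square algebra_simps)
    then show ?thesis using ys by (simp add: field_simps)
  qed
  show ?thesis unfolding boost_zero vector_3 w using e1 e2 by simp
qed

lemma transpose_sandwich:
  fixes Ob P :: "real^3^3"
  assumes "transpose P = P"
  shows "transpose (transpose Ob ** P ** Ob) = transpose Ob ** P ** Ob"
  using assms by (simp add: matrix_transpose_mul matrix_mul_assoc)

lemma sandwich_neg:
  fixes Ob Q :: "real^3^3"
  shows "transpose Ob ** (- Q) ** Ob = - (transpose Ob ** Q ** Ob)"
  by (simp add: vec_eq_iff matrix_matrix_mult_def sum_negf)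

theorem proposition2:
  fixes d1 d2 ys KP KI u0 :: real
  assumes "d1 > 0" and "d2 > 0" and "ys > 0"
    and "d1 * d2 < 1 / (4 * ys^2)"
    and "KP \<ge> 0" and "KI > 0"
  defines "f \<equiv> boost_f d1 d2 ys KP KI u0"
    and "xu \<equiv> chi_u d1 d2 ys KI u0"
    and "xs \<equiv> chi_s d1 d2 ys KI u0"
  shows
    "({z. equilibrium f z} = {xu, xs} \<and> xu \<noteq> xs \<and> xu $ 2 = ys \<and> xs $ 2 = ys)
     \<and> unstable f xu
     \<and> (KP \<ge> d1^2 / 2 \<and> KI \<ge> 5 / 16 * d1 / ys^2 \<longrightarrow> loc_asym_stable f xs)
     \<and> (KP \<ge> d1^2 / 2 \<and> KI \<ge> 5 / 16 * d1 / ys^2 \<longrightarrow>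
          (\<forall>A P Q :: real^3^3.
             (f has_derivative (\<lambda>h. A *v h)) (at xs) \<and>
             pos_def Q \<and> pos_def P \<and> transpose A ** P + P ** A = - Q \<longrightarrow>
             (\<exists>\<rho>0>0. \<forall>\<rho>. 0 < \<rho> \<and> \<rho> \<le> \<rho>0 \<longrightarrow>
                {z. (z - xs) \<bullet> (P *v (z - xs)) \<le> \<rho>} \<subseteq> domain_of_attraction f xs)))"
proof -
  have d1: "d1 > 0" and d2: "d2 > 0" and ys: "ys > 0" and KP: "KP \<ge> 0" and KI: "KI > 0"
    using assms(1-3,5,6) by auto
  have disc: "4 * d1 * d2 * ys^2 < 1"
  proof -
    have "ys^2 > 0" using ys by simp
    then have "d1 * d2 * (4 * ys^2) < 1 / (4 * ys^2) * (4 * ys^2)"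
      using assms(4) by (intro mult_strict_right_mono) auto
    then show ?thesis using \<open>ys^2 > 0\<close> by (simp add: mult_ac)
  qed
  define S where "S = sqrt (1 - 4 * d1 * d2 * ys^2)"
  have S2: "S^2 = 1 - 4 * d1 * d2 * ys^2" unfolding S_def using disc by simp
  have S0: "S > 0" unfolding S_def using disc by simp
  have "S^2 < 1" unfolding S2 using d1 d2 ys by simp
  then have S1: "S < 1" using S0 by (simp add: power2_less_1_iff)
  define Xu where "Xu = (1 - S) / (2 * d1)"
  define Xs where "Xs = (1 + S) / (2 * d1)"
  have Xu0: "Xu > 0" unfolding Xu_def using S1 d1 by simp
  have Xs0: "Xs > 0" unfolding Xs_def using S0 d1 by simp
  have xu_eq: "xu = vector [Xu, ys, (1 - d1 * Xu - u0 * ys) / (KI * ys)]"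
    unfolding xu_def chi_u_def Xu_def S_def Let_def ..
  have xs_eq: "xs = vector [Xs, ys, (1 - d1 * Xs - u0 * ys) / (KI * ys)]"
    unfolding xs_def chi_s_def Xs_def S_def Let_def ..
  have roots: "d1 * X^2 - X + d2 * ys^2 = 0 \<longleftrightarrow> X = Xu \<or> X = Xs" for X
  proof -
    have "d1 * X^2 - X + d2 * ys^2 = 0 \<longleftrightarrow> (2 * d1 * X - 1)^2 = S^2"
    proof -
      have "(2 * d1 * X - 1)^2 - S^2 = 4 * d1 * (d1 * X^2 - X + d2 * ys^2)"
        unfolding S2 by (simp add: power2_eq_square algebra_simps)
      then show ?thesis using d1 by auto
    qed
    also have "\<dots> \<longleftrightarrow> 2 * d1 * X - 1 = S \<or> 2 * d1 * X - 1 = - S" by (rule power2_eq_iff)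
    also have "\<dots> \<longleftrightarrow> X = Xs \<or> X = Xu" unfolding Xu_def Xs_def using d1 by (auto simp: field_simps)
    finally show ?thesis by blast
  qed
  have qu: "d1 * Xu^2 - Xu + d2 * ys^2 = 0" using roots by blast
  have qs: "d1 * Xs^2 - Xs + d2 * ys^2 = 0" using roots by blast
  have fxu: "f xu = 0" unfolding f_def xu_eq by (rule equil_point[OF qu _ ys KI]) (use Xu0 in simp)
  have fxs: "f xs = 0" unfolding f_def xs_eq by (rule equil_point[OF qs _ ys KI]) (use Xs0 in simp)
  have XuXs: "Xu \<noteq> Xs" unfolding Xu_def Xs_def using S0 d1 by (simp add: divide_simps)
  have C1: "{z. equilibrium f z} = {xu, xs} \<and> xu \<noteq> xs \<and> xu $ 2 = ys \<and> xs $ 2 = ys"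
  proof (intro conjI)
    show "{z. equilibrium f z} = {xu, xs}"
    proof (intro equalityI subsetI)
      fix z assume "z \<in> {z. equilibrium f z}"
      then have "boost_f d1 d2 ys KP KI u0 z = 0" unfolding equilibrium_def f_def by simp
      then have z2: "z$2 = ys" and e1: "ys * (u0 + KI * z$3) = 1 - d1 * z$1"
        and e2: "z$1 * (u0 + KI * z$3) = d2 * ys" unfolding boost_zero by auto
      have "z$1 * (1 - d1 * z$1) = d2 * ys * ys"
      proof -
        have "z$1 * (1 - d1 * z$1) = z$1 * (ys * (u0 + KI * z$3))" using e1 by simp
        also have "\<dots> = ys * (z$1 * (u0 + KI * z$3))" by (simp add: algebra_simps)
        also have "\<dots> = d2 * ys * ys" using e2 by simp
        finally show ?thesis .
      qed
      then have "d1 * (z$1)^2 - z$1 + d2 * ys^2 = 0" by (simp add: power2_eq_square algebra_simps)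
      then have z1: "z$1 = Xu \<or> z$1 = Xs" using roots by blast
      have z3: "z$3 = (1 - d1 * z$1 - u0 * ys) / (KI * ys)"
        using e1 KI ys by (simp add: field_simps)
      show "z \<in> {xu, xs}"
        using z1 z2 z3 unfolding xu_eq xs_eq by (auto simp: vec3_eq_iff)
    next
      fix z assume "z \<in> {xu, xs}"
      then show "z \<in> {z. equilibrium f z}" using fxu fxs unfolding equilibrium_def by auto
    qed
    show "xu \<noteq> xs" using XuXs unfolding xu_eq xs_eq by (auto simp: vec3_eq_iff)
    show "xu $ 2 = ys" unfolding xu_eq by simp
    show "xs $ 2 = ys" unfolding xs_eq by simp
  qed
  have lip: "\<And>c R. \<exists>L>0. \<forall>a\<in>cball c R. \<forall>b\<in>cball c R. norm (f a - f b) \<le> L * norm (a - b)"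
    unfolding f_def by (rule boost_lip)
  have fd: "\<And>z. (f has_derivative (\<lambda>h. jac d1 d2 ys KP KI u0 z *v h)) (at z)"
    unfolding f_def by (rule boost_deriv)
  have C2: "unstable f xu"
  proof -
    define w where "w = u0 + KI * xu$3"
    have wys: "w * ys = 1 - d1 * Xu" unfolding w_def xu_eq using KI ys by (simp add: field_simps)
    have w0: "w > 0"
    proof -
      have "1 - d1 * Xu = (1 + S) / 2" unfolding Xu_def using d1 by (simp add: field_simps)
      then have "w * ys > 0" using wys S0 by simp
      then show ?thesis using ys by (simp add: zero_less_mult_iff)
    qed
    define Ob where "Ob = obs d2 KP KI Xu w"
    define a0 where "a0 = KI * (d1 * Xu - w * ys)"
    define a1 where "a1 = d1 * (d2 + KP * Xu) - w * KP * ys + w^2 + KI * Xu"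
    define a2 where "a2 = d1 + d2 + KP * Xu"
    have sim: "Ob ** jac d1 d2 ys KP KI u0 xu = comp3 a0 a1 a2 ** Ob"
    proof -
      have x1: "xu$1 = Xu" and x2: "xu$2 = ys" unfolding xu_eq by simp_all
      show ?thesis
        using obs_similar[where dA=d1 and dB=d2 and ys=ys and KP=KP and KI=KI and uu=u0 and z=xu, OF x2]
        unfolding x1 by (simp add: Ob_def a0_def a1_def a2_def w_def)
    qed
    have a0n: "a0 < 0"
    proof -
      have "d1 * Xu - w * ys = - S" unfolding wys Xu_def using d1 by (simp add: field_simps)
      then show ?thesis unfolding a0_def using KI S0 by (simp add: mult_pos_neg)
    qed
    have a2p: "a2 > 0" unfolding a2_def using d1 d2 KP Xu0 by (simp add: add_pos_nonneg)
    obtain P Q vc where PQ: "transpose P = P" "pos_def Q" "transpose (comp3 a0 a1 a2) ** P + P ** comp3 a0 a1 a2 = Q"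
      "vc \<bullet> (P *v vc) > 0"
      using unstab_comp[OF a0n a2p] by blast
    have inj: "Ob *v v = 0 \<Longrightarrow> v = 0" for v
      unfolding Ob_def obs_def mat3_vec using w0 by (auto simp: vec3_eq_iff)
    define ve :: "real^3" where "ve = vector [((d2 + KP * Xu) * (- vc$2) - KI * Xu * vc$1 - vc$3) / w, - vc$2, vc$1]"
    have Ove: "Ob *v ve = vc"
      unfolding Ob_def obs_def mat3_vec ve_def using w0 by (simp add: vec3_eq_iff field_simps)
    show ?thesis
    proof (rule unstab_thm[OF fxu fd])
      show "transpose (transpose Ob ** P ** Ob) = transpose Ob ** P ** Ob" by (rule transpose_sandwich[OF PQ(1)])
      show "pos_def (transpose Ob ** Q ** Ob)" by (rule transfer_pd[OF PQ(2) inj])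
      show "transpose (jac d1 d2 ys KP KI u0 xu) ** (transpose Ob ** P ** Ob) + (transpose Ob ** P ** Ob) ** jac d1 d2 ys KP KI u0 xu
            = transpose Ob ** Q ** Ob"
        by (rule transfer_lyap[OF sim PQ(3)])
      show "ve \<bullet> ((transpose Ob ** P ** Ob) *v ve) > 0" unfolding transfer_quad Ove by (rule PQ(4))
      show "\<And>R. \<exists>L>0. \<forall>a\<in>cball xu R. \<forall>b\<in>cball xu R. norm (f a - f b) \<le> L * norm (a - b)" by (rule lip)
    qed
  qed
  have stab: "lyap_stable f xs \<and> (\<exists>\<eta>>0. ball xs \<eta> \<subseteq> domain_of_attraction f xs)"
  proof -
    define w where "w = u0 + KI * xs$3"
    have wys: "w * ys = 1 - d1 * Xs" unfolding w_def xs_eq using KI ys by (simp add: field_simps)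
    have w0: "w > 0"
    proof -
      have "1 - d1 * Xs = (1 - S) / 2" unfolding Xs_def using d1 by (simp add: field_simps)
      then have "w * ys > 0" using wys S1 by simp
      then show ?thesis using ys by (simp add: zero_less_mult_iff)
    qed
    define Ob where "Ob = obs d2 KP KI Xs w"
    define a0 where "a0 = KI * (d1 * Xs - w * ys)"
    define a1 where "a1 = d1 * (d2 + KP * Xs) - w * KP * ys + w^2 + KI * Xs"
    define a2 where "a2 = d1 + d2 + KP * Xs"
    have sim: "Ob ** jac d1 d2 ys KP KI u0 xs = comp3 a0 a1 a2 ** Ob"
    proof -
      have x1: "xs$1 = Xs" and x2: "xs$2 = ys" unfolding xs_eq by simp_all
      show ?thesis
        using obs_similar[where dA=d1 and dB=d2 and ys=ys and KP=KP and KI=KI and uu=u0 and z=xs, OF x2]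
        unfolding x1 by (simp add: Ob_def a0_def a1_def a2_def w_def)
    qed
    have dS: "d1 * Xs - w * ys = S" unfolding wys Xs_def using d1 by (simp add: field_simps)
    have a0p: "a0 > 0" unfolding a0_def dS using KI S0 by simp
    have a2p: "a2 > 0" unfolding a2_def using d1 d2 KP Xs0 by (simp add: add_pos_nonneg)
    have a1eq: "a1 = d1 * d2 + KP * S + w^2 + KI * Xs"
      unfolding a1_def dS[symmetric] by (simp add: algebra_simps)
    have a1ge: "a1 \<ge> KI * Xs" unfolding a1eq using d1 d2 KP S0 by (simp add: add_nonneg_nonneg)
    have a2ge: "a2 \<ge> d1" unfolding a2_def using d2 KP Xs0 by simp
    have KIX: "KI * Xs > 0" using KI Xs0 by simp
    have a1p: "0 \<le> a1" using a1ge KIX by linarith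
    have "a1 * a2 \<ge> KI * Xs * d1" using mult_mono[OF a1ge a2ge a1p less_imp_le[OF d1]] by simp
    moreover have "KI * Xs * d1 = KI * ((1 + S) / 2)" unfolding Xs_def using d1 by simp
    moreover have "KI * ((1 + S) / 2) > KI * S" using KI S1 by (intro mult_strict_left_mono) auto
    ultimately have D: "a1 * a2 > a0" unfolding a0_def dS by linarith
    obtain Pc Qc where PQ: "pos_def Pc" "pos_def Qc" "transpose (comp3 a0 a1 a2) ** Pc + Pc ** comp3 a0 a1 a2 = - Qc"
      using hurwitz_comp[OF a0p a2p D] by blast
    have inj: "Ob *v v = 0 \<Longrightarrow> v = 0" for v
      unfolding Ob_def obs_def mat3_vec using w0 by (auto simp: vec3_eq_iff)
    have res: "(\<exists>\<rho>0>0. \<forall>\<rho>. 0 < \<rho> \<and> \<rho> \<le> \<rho>0 \<longrightarrow> {z. (z - xs) \<bullet> ((transpose Ob ** Pc ** Ob) *v (z - xs)) \<le> \<rho>} \<subseteq> domain_of_attraction f xs)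
     \<and> lyap_stable f xs \<and> (\<exists>\<eta>>0. ball xs \<eta> \<subseteq> domain_of_attraction f xs)"
    proof (rule lyap_stab_thm[OF fxs fd])
      show "pos_def (transpose Ob ** Pc ** Ob)" by (rule transfer_pd[OF PQ(1) inj])
      show "pos_def (transpose Ob ** Qc ** Ob)" by (rule transfer_pd[OF PQ(2) inj])
      show "transpose (jac d1 d2 ys KP KI u0 xs) ** (transpose Ob ** Pc ** Ob) + (transpose Ob ** Pc ** Ob) ** jac d1 d2 ys KP KI u0 xs
            = - (transpose Ob ** Qc ** Ob)"
        using transfer_lyap[OF sim PQ(3)] by (simp add: sandwich_neg)
      show "\<And>R. \<exists>L>0. \<forall>a\<in>cball xs R. \<forall>b\<in>cball xs R. norm (f a - f b) \<le> L * norm (a - b)" by (rule lip)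
    qed
    then show ?thesis by blast
  qed
  have C3: "loc_asym_stable f xs" using stab unfolding loc_asym_stable_def by blast
  have C4: "\<forall>A P Q :: real^3^3.
             (f has_derivative (\<lambda>h. A *v h)) (at xs) \<and>
             pos_def Q \<and> pos_def P \<and> transpose A ** P + P ** A = - Q \<longrightarrow>
             (\<exists>\<rho>0>0. \<forall>\<rho>. 0 < \<rho> \<and> \<rho> \<le> \<rho>0 \<longrightarrow>
                {z. (z - xs) \<bullet> (P *v (z - xs)) \<le> \<rho>} \<subseteq> domain_of_attraction f xs)"
  proof (intro allI impI)
    fix A P Q :: "real^3^3"
    assume H: "(f has_derivative (\<lambda>h. A *v h)) (at xs) \<and> pos_def Q \<and> pos_def P \<and> transpose A ** P + P ** A = - Q"
    have "(\<exists>\<rho>0>0. \<forall>\<rho>. 0 < \<rho> \<and> \<rho> \<le> \<rho>0 \<longrightarrow> {z. (z - xs) \<bullet> (P *v (z - xs)) \<le> \<rho>} \<subseteq> domain_of_attraction f xs)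
     \<and> lyap_stable f xs \<and> (\<exists>\<eta>>0. ball xs \<eta> \<subseteq> domain_of_attraction f xs)"
    proof -
      have H1: "(f has_derivative (\<lambda>h. A *v h)) (at xs)" and H2: "pos_def Q" and H3: "pos_def P"
        and H4: "transpose A ** P + P ** A = - Q" using H by auto
      show ?thesis by (rule lyap_stab_thm[where f=f and xe=xs, OF fxs H1 H3 H2 H4 lip])
    qed
    then show "\<exists>\<rho>0>0. \<forall>\<rho>. 0 < \<rho> \<and> \<rho> \<le> \<rho>0 \<longrightarrow> {z. (z - xs) \<bullet> (P *v (z - xs)) \<le> \<rho>} \<subseteq> domain_of_attraction f xs"
      by blast
  qed
  show ?thesis using C1 C2 C3 C4 by blast
qed


end
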